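(* If $A$ is an elementary abelian $p^n$-group of ppc-rank $r$, then there are exactly $r+1$ isomorphism classes of interchange rings $(A,+,\bullet)$ with additive group $(A,+)$ for which $(A,\bullet)$ is both commutative and associative.
   Context: For a prime $p$ and integers $n,r\ge1$, an elementary abelian $p^n$-group of ppc-rank $r$ is a direct sum of $r$ copies of the cyclic group of order $p^n$. An interchange ring is a triple $(A,+,\bullet)$ where $(A,+)$ is an abelian group and $\bullet$ is a binary operation satisfying $(w+x)\bullet(y+z) = (w\bullet y)+(x\bullet z)$ for all $w,x,y,z\in A$. An isomorphism of interchange rings is a bijection that is a homomorphism for both operations. *)

theory Defs
  imports "HOL-Algebra.Algebra" "HOL-Computational_Algebra.Primes"
begin

text \<open>An elementary abelian p^n-group of ppc-rank r: a group isomorphic to the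
  direct sum (= direct product, finitely many factors) of r copies of Z/p^n.
  The additive group is written in HOL-Algebra's multiplicative notation.\<close>
definition elem_abelian_ppc :: "('a, 'b) monoid_scheme \<Rightarrow> nat \<Rightarrow> nat \<Rightarrow> nat \<Rightarrow> bool" where
  "elem_abelian_ppc G p n r \<longleftrightarrow>
     comm_group G \<and> G \<cong> product_group {..<r} (\<lambda>_. integer_mod_group (p ^ n))"

definition interchange_op :: "('a, 'b) monoid_scheme \<Rightarrow> ('a \<Rightarrow> 'a \<Rightarrow> 'a) \<Rightarrow> bool" where
  "interchange_op G m \<longleftrightarrow>
     (\<forall>x\<in>carrier G. \<forall>y\<in>carrier G. m x y \<in> carrier G) \<and>
     (\<forall>w\<in>carrier G. \<forall>x\<in>carrier G. \<forall>y\<in>carrier G. \<forall>z\<in>carrier G.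
        m (w \<otimes>\<^bsub>G\<^esub> x) (y \<otimes>\<^bsub>G\<^esub> z) = m w y \<otimes>\<^bsub>G\<^esub> m x z)"

definition op_commutative :: "'a set \<Rightarrow> ('a \<Rightarrow> 'a \<Rightarrow> 'a) \<Rightarrow> bool" where
  "op_commutative A m \<longleftrightarrow> (\<forall>x\<in>A. \<forall>y\<in>A. m x y = m y x)"

definition op_associative :: "'a set \<Rightarrow> ('a \<Rightarrow> 'a \<Rightarrow> 'a) \<Rightarrow> bool" where
  "op_associative A m \<longleftrightarrow> (\<forall>x\<in>A. \<forall>y\<in>A. \<forall>z\<in>A. m (m x y) z = m x (m y z))"

definition interchange_iso :: "('a, 'b) monoid_scheme \<Rightarrow> ('a \<Rightarrow> 'a \<Rightarrow> 'a) \<Rightarrow> ('a \<Rightarrow> 'a \<Rightarrow> 'a) \<Rightarrow> bool" where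
  "interchange_iso G m m' \<longleftrightarrow>
     (\<exists>\<phi>. \<phi> \<in> iso G G \<and> (\<forall>x\<in>carrier G. \<forall>y\<in>carrier G. \<phi> (m x y) = m' (\<phi> x) (\<phi> y)))"

definition comm_assoc_interchange_ops :: "('a, 'b) monoid_scheme \<Rightarrow> ('a \<Rightarrow> 'a \<Rightarrow> 'a) set" where
  "comm_assoc_interchange_ops G =
     {m. interchange_op G m \<and> op_commutative (carrier G) m \<and> op_associative (carrier G) m}"

end

theory Submission
  imports Defs
begin

definition lc :: "('a,'b) monoid_scheme \<Rightarrow> (nat \<Rightarrow> 'a) \<Rightarrow> (nat \<Rightarrow> nat) \<Rightarrow> nat set \<Rightarrow> 'a" where
  "lc A b v I = finprod A (\<lambda>i. b i [^]\<^bsub>A\<^esub> v i) I"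

definition coeffs :: "nat \<Rightarrow> nat set \<Rightarrow> (nat \<Rightarrow> nat) set" where
  "coeffs q I = PiE I (\<lambda>_. {..<q})"

definition is_basis :: "('a,'b) monoid_scheme \<Rightarrow> nat \<Rightarrow> (nat \<Rightarrow> 'a) \<Rightarrow> nat set \<Rightarrow> bool" where
  "is_basis A q b I \<longleftrightarrow> finite I \<and> b \<in> I \<rightarrow> carrier A \<and> (\<forall>x\<in>carrier A. x [^]\<^bsub>A\<^esub> q = \<one>\<^bsub>A\<^esub>)
     \<and> bij_betw (\<lambda>v. lc A b v I) (coeffs q I) (carrier A)"

definition co :: "('a,'b) monoid_scheme \<Rightarrow> nat \<Rightarrow> (nat \<Rightarrow> 'a) \<Rightarrow> nat set \<Rightarrow> 'a \<Rightarrow> (nat \<Rightarrow> nat)" where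
  "co A q b I y = inv_into (coeffs q I) (\<lambda>v. lc A b v I) y"

context comm_group
begin

lemma lc_closed[simp]: "b \<in> I \<rightarrow> carrier G \<Longrightarrow> lc G b v I \<in> carrier G"
  unfolding lc_def by (auto intro!: finprod_closed)

lemma lc_mult:
  assumes "b \<in> I \<rightarrow> carrier G"
  shows "lc G b v I \<otimes> lc G b w I = lc G b (\<lambda>i. v i + w i) I"
proof -
  have "lc G b v I \<otimes> lc G b w I = finprod G (\<lambda>i. b i [^] v i \<otimes> b i [^] w i) I"
    unfolding lc_def using assms by (subst finprod_multf) auto
  also have "\<dots> = lc G b (\<lambda>i. v i + w i) I"
    unfolding lc_def using assms by (intro finprod_cong') (auto simp: nat_pow_mult Pi_iff)
  finally show ?thesis .
qed

lemma lc_zero: "lc G b (\<lambda>i. 0) I = \<one>"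
  unfolding lc_def by simp

lemma lc_pow:
  assumes "b \<in> I \<rightarrow> carrier G"
  shows "lc G b v I [^] (m::nat) = lc G b (\<lambda>i. m * v i) I"
proof (induct m)
  case 0 then show ?case by (simp add: lc_zero)
next
  case (Suc m)
  have "lc G b v I [^] Suc m = lc G b (\<lambda>i. m * v i) I \<otimes> lc G b v I"
    using Suc by simp
  also have "\<dots> = lc G b (\<lambda>i. Suc m * v i) I"
    using assms by (simp add: lc_mult add.commute)
  finally show ?case .
qed

lemma lc_cong:
  assumes "\<And>i. i \<in> I \<Longrightarrow> v i = w i" "\<And>i. i \<in> I \<Longrightarrow> b i = c i" "c \<in> I \<rightarrow> carrier G"
  shows "lc G b v I = lc G c w I"
  unfolding lc_def using assms by (intro finprod_cong') auto

lemma lc_insert: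
  assumes "finite I" "j \<notin> I" "b \<in> insert j I \<rightarrow> carrier G"
  shows "lc G b v (insert j I) = b j [^] v j \<otimes> lc G b v I"
  unfolding lc_def using assms by (subst finprod_insert) auto

lemma lc_zero_out:
  assumes "finite I" "J \<subseteq> I" "\<And>i. i \<in> I - J \<Longrightarrow> v i = 0" "b \<in> I \<rightarrow> carrier G"
  shows "lc G b v I = lc G b v J"
proof -
  have "I = J \<union> (I - J)" using assms by auto
  then have "lc G b v I = finprod G (\<lambda>i. b i [^] v i) (J \<union> (I - J))" by (simp add: lc_def)
  also have "\<dots> = lc G b v J \<otimes> finprod G (\<lambda>i. b i [^] v i) (I - J)"
    unfolding lc_def using assms
    by (subst finprod_Un_disjoint) (auto intro: finite_subset)
  also have "finprod G (\<lambda>i. b i [^] v i) (I - J) = \<one>"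
    using assms by (intro finprod_one_eqI) auto
  finally have "lc G b v I = lc G b v J \<otimes> \<one>" .
  moreover have "lc G b v J \<in> carrier G" using assms by (intro lc_closed) auto
  ultimately show ?thesis by simp
qed

lemma lc_delta:
  assumes "finite I" "j \<in> I" "b \<in> I \<rightarrow> carrier G"
  shows "lc G b (\<lambda>i. if i = j then 1 else 0) I = b j"
proof -
  have "lc G b (\<lambda>i. if i = j then 1 else 0) I = lc G b (\<lambda>i. if i = j then 1 else 0) {j}"
    using assms by (intro lc_zero_out) auto
  also have "\<dots> = b j" using assms by (auto simp: lc_def Pi_iff)
  finally show ?thesis .
qed

lemma pow_mod_exp:
  assumes "x \<in> carrier G" "x [^] (q::nat) = \<one>"
  shows "x [^] (m::nat) = x [^] (m mod q)"
proof -
  have "x [^] m = x [^] (q * (m div q) + m mod q)" by simp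
  also have "\<dots> = (x [^] q) [^] (m div q) \<otimes> x [^] (m mod q)"
    using assms(1) by (simp only: nat_pow_mult nat_pow_pow)
  also have "\<dots> = x [^] (m mod q)" using assms by simp
  finally show ?thesis .
qed

lemma lc_mod:
  assumes "\<And>i. i \<in> I \<Longrightarrow> b i [^] q = \<one>" "b \<in> I \<rightarrow> carrier G"
  shows "lc G b v I = lc G b (\<lambda>i\<in>I. v i mod q) I"
  unfolding lc_def using assms by (intro finprod_cong') (auto simp: Pi_iff intro: pow_mod_exp)

end


lemma coeffs_restrict_mod: "0 < q \<Longrightarrow> (\<lambda>i\<in>I. v i mod q) \<in> coeffs q I"
  by (auto simp: coeffs_def)

context comm_group
begin

lemma subgroup_comm_group:
  assumes "subgroup K G"
  shows "comm_group (G\<lparr>carrier := K\<rparr>)"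
proof -
  have "group (G\<lparr>carrier := K\<rparr>)" using assms(1) by (rule subgroup.subgroup_is_group) (rule is_group)
  moreover have "\<And>x y. x \<in> K \<Longrightarrow> y \<in> K \<Longrightarrow> x \<otimes> y = y \<otimes> x"
    using assms(1) by (meson m_comm subgroup.mem_carrier)
  ultimately show ?thesis
    by (simp add: comm_group_def comm_monoid_def comm_monoid_axioms_def group_def)
qed

lemma lc_subgroup:
  assumes "subgroup K G" "finite I" "b \<in> I \<rightarrow> K"
  shows "lc (G\<lparr>carrier := K\<rparr>) b v I = lc G b v I"
  using assms(2,3)
proof (induct I rule: finite_induct)
  case empty
  interpret H: comm_group "G\<lparr>carrier := K\<rparr>" using assms subgroup_comm_group by blast
  show ?case by (simp add: lc_def)
next
  case (insert j I)
  interpret H: comm_group "G\<lparr>carrier := K\<rparr>" using assms subgroup_comm_group by blast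
  have KG: "K \<subseteq> carrier G" using assms(1) subgroup.subset by blast
  have "lc (G\<lparr>carrier := K\<rparr>) b v (insert j I) = b j [^]\<^bsub>G\<lparr>carrier := K\<rparr>\<^esub> v j \<otimes> lc (G\<lparr>carrier := K\<rparr>) b v I"
    using insert by (subst H.lc_insert) auto
  also have "\<dots> = b j [^] v j \<otimes> lc G b v I"
    using insert by (simp add: nat_pow_def)
  also have "\<dots> = lc G b v (insert j I)"
    using insert KG by (subst lc_insert) auto
  finally show ?case .
qed

lemma lc_hom:
  assumes "comm_group H" "h \<in> hom G H" "finite I" "b \<in> I \<rightarrow> carrier G"
  shows "h (lc G b v I) = lc H (\<lambda>i. h (b i)) v I"
  using assms(3,4)
proof (induct I rule: finite_induct)
  case empty
  interpret H: comm_group H by fact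
  interpret group_hom G H h using assms is_group by (simp add: group_hom_def group_hom_axioms_def comm_group.axioms)
  show ?case by (simp add: lc_def)
next
  case (insert j I)
  interpret H: comm_group H by fact
  interpret group_hom G H h using assms is_group by (simp add: group_hom_def group_hom_axioms_def comm_group.axioms)
  have "h (lc G b v (insert j I)) = h (b j [^] v j \<otimes> lc G b v I)"
    using insert by (subst lc_insert) auto
  also have "\<dots> = h (b j) [^]\<^bsub>H\<^esub> v j \<otimes>\<^bsub>H\<^esub> lc H (\<lambda>i. h (b i)) v I"
    using insert by (simp add: hom_nat_pow)
  also have "\<dots> = lc H (\<lambda>i. h (b i)) v (insert j I)"
    using insert by (subst H.lc_insert) (auto simp: Pi_iff)
  finally show ?case .
qed


lemma basis_finite: "is_basis G q b I \<Longrightarrow> finite I" by (simp add: is_basis_def)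
lemma basis_funcset: "is_basis G q b I \<Longrightarrow> b \<in> I \<rightarrow> carrier G" by (simp add: is_basis_def)
lemma basis_exp: "is_basis G q b I \<Longrightarrow> x \<in> carrier G \<Longrightarrow> x [^] q = \<one>" by (simp add: is_basis_def)
lemma basis_bij: "is_basis G q b I \<Longrightarrow> bij_betw (\<lambda>v. lc G b v I) (coeffs q I) (carrier G)"
  by (simp add: is_basis_def)

lemma basis_co:
  assumes "is_basis G q b I" "y \<in> carrier G"
  shows "co G q b I y \<in> coeffs q I" "lc G b (co G q b I y) I = y"
proof -
  have bij: "bij_betw (\<lambda>v. lc G b v I) (coeffs q I) (carrier G)" using assms basis_bij by blast
  show "co G q b I y \<in> coeffs q I" unfolding co_def
    using assms(2) bij by (metis bij_betw_def inv_into_into)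
  show "lc G b (co G q b I y) I = y" unfolding co_def
    using assms(2) bij by (metis bij_betw_def f_inv_into_f)
qed

lemma basis_co_lc:
  assumes "is_basis G q b I" "v \<in> coeffs q I"
  shows "co G q b I (lc G b v I) = v"
proof -
  have bij: "bij_betw (\<lambda>v. lc G b v I) (coeffs q I) (carrier G)" using assms basis_bij by blast
  then show ?thesis unfolding co_def using assms(2)
    by (metis bij_betw_def inv_into_f_f)
qed

end


context comm_group
begin

lemma basis_co_lc_gen:
  assumes "is_basis G q b I" "0 < q"
  shows "co G q b I (lc G b v I) = (\<lambda>i\<in>I. v i mod q)"
proof -
  have "lc G b v I = lc G b (\<lambda>i\<in>I. v i mod q) I"
    using assms basis_funcset[OF assms(1)] basis_exp[OF assms(1)]
    by (intro lc_mod) auto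
  then show ?thesis using basis_co_lc[OF assms(1) coeffs_restrict_mod[OF assms(2)]] by simp
qed

lemma co_lt: "is_basis G q b I \<Longrightarrow> y \<in> carrier G \<Longrightarrow> i \<in> I \<Longrightarrow> co G q b I y i < q"
  using basis_co(1)[of q b I y] by (auto simp: coeffs_def)

lemma co_inj:
  assumes "is_basis G q b I" "y \<in> carrier G" "z \<in> carrier G" "co G q b I y = co G q b I z"
  shows "y = z"
  using basis_co(2)[OF assms(1,2)] basis_co(2)[OF assms(1,3)] assms(4) by metis

lemma co_mult:
  assumes "is_basis G q b I" "0 < q" "y \<in> carrier G" "z \<in> carrier G"
  shows "co G q b I (y \<otimes> z) = (\<lambda>i\<in>I. (co G q b I y i + co G q b I z i) mod q)"
proof -
  have "y \<otimes> z = lc G b (co G q b I y) I \<otimes> lc G b (co G q b I z) I"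
    using basis_co(2)[OF assms(1,3)] basis_co(2)[OF assms(1,4)] by simp
  also have "\<dots> = lc G b (\<lambda>i. co G q b I y i + co G q b I z i) I"
    using basis_funcset[OF assms(1)] by (rule lc_mult)
  finally show ?thesis using basis_co_lc_gen[OF assms(1,2)] by simp
qed

lemma co_pow:
  assumes "is_basis G q b I" "0 < q" "y \<in> carrier G"
  shows "co G q b I (y [^] (m::nat)) = (\<lambda>i\<in>I. (m * co G q b I y i) mod q)"
proof -
  have "y [^] m = lc G b (co G q b I y) I [^] m"
    using basis_co(2)[OF assms(1,3)] by simp
  also have "\<dots> = lc G b (\<lambda>i. m * co G q b I y i) I"
    using basis_funcset[OF assms(1)] by (rule lc_pow)
  finally show ?thesis using basis_co_lc_gen[OF assms(1,2)] by simp
qed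

lemma co_basis_vec:
  assumes "is_basis G q b I" "1 < q" "j \<in> I"
  shows "co G q b I (b j) = (\<lambda>i\<in>I. if i = j then 1 else 0)"
proof -
  have "b j = lc G b (\<lambda>i. if i = j then 1 else 0) I"
    using lc_delta basis_finite[OF assms(1)] basis_funcset[OF assms(1)] assms(3) by simp
  then show ?thesis using basis_co_lc_gen[OF assms(1)] assms(2) by (auto simp: fun_eq_iff)
qed

lemma co_one:
  assumes "is_basis G q b I" "0 < q"
  shows "co G q b I \<one> = (\<lambda>i\<in>I. 0)"
  using basis_co_lc_gen[OF assms, of "\<lambda>i. 0"] by (simp add: lc_zero)

lemma lc_upd0:
  assumes "finite J" "j \<notin> J" "b \<in> insert j J \<rightarrow> carrier G"
  shows "lc G b v J = lc G b (v(j := 0)) (insert j J)"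
proof -
  have "lc G b (v(j := 0)) (insert j J) = b j [^] (0::nat) \<otimes> lc G b (v(j := 0)) J"
    using assms by (subst lc_insert) auto
  also have "\<dots> = lc G b v J"
    using assms by (subst lc_cong[of J _ v b b]) auto
  finally show ?thesis by simp
qed

lemma mod_cancel_aux:
  fixes a b c d q :: nat
  assumes "(a * c) mod q = (b * c) mod q" "(c * d) mod q = 1"
  shows "a mod q = b mod q"
proof -
  have "(a * c * d) mod q = (b * c * d) mod q" using assms(1) by (metis mod_mult_left_eq)
  moreover have "(a * c * d) mod q = a mod q"
    by (metis assms(2) mod_mult_right_eq mult.assoc mult.right_neutral)
  moreover have "(b * c * d) mod q = b mod q"
    by (metis assms(2) mod_mult_right_eq mult.assoc mult.right_neutral)
  ultimately show ?thesis by simp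
qed

lemma coprime_inverse_mod:
  fixes c q :: nat
  assumes "coprime c q" "1 < q"
  shows "\<exists>d. (c * d) mod q = 1"
proof (cases "c = 0")
  case True then show ?thesis using assms by simp
next
  case False
  obtain x y where "c * x = q * y + gcd c q" using bezout_nat[OF False] by blast
  then have "c * x = q * y + 1" using assms by simp
  then have "(c * x) mod q = (1 + q * y) mod q" by simp
  also have "\<dots> = 1" using assms(2) by (metis mod_mult_self2 mod_less)
  finally have "(c * x) mod q = 1" .
  then show ?thesis by blast
qed

end


context comm_group
begin

lemma lc_span_basis:
  assumes "is_basis G q b I" "0 < q" "\<And>y. y \<in> carrier G \<Longrightarrow> \<exists>v. y = lc G c v I"
    "c \<in> I \<rightarrow> carrier G"
  shows "\<And>y. y \<in> carrier G \<Longrightarrow> y \<in> (\<lambda>v. lc G c v I) ` coeffs q I"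
proof -
  fix y assume y: "y \<in> carrier G"
  obtain v where v: "y = lc G c v I" using assms(3)[OF y] by blast
  have "lc G c v I = lc G c (\<lambda>i\<in>I. v i mod q) I"
    using assms basis_exp[OF assms(1)] by (intro lc_mod) auto
  then show "y \<in> (\<lambda>v. lc G c v I) ` coeffs q I"
    using v coeffs_restrict_mod[OF assms(2)] by blast
qed

lemma exchange:
  assumes bas: "is_basis G q a (insert j J)" and jJ: "j \<notin> J" and q: "1 < q"
    and x: "x \<in> carrier G" and cop: "coprime (co G q a (insert j J) x j) q"
  shows "is_basis G q (a(j := x)) (insert j J)"
proof -
  define I where "I = insert j J"
  define b where "b = a(j := x)"
  define c0 where "c0 = co G q a I x j"
  have finI: "finite I" using basis_finite[OF bas] I_def by simp
  have finJ: "finite J" using finI I_def by simp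
  have aI: "a \<in> I \<rightarrow> carrier G" using basis_funcset[OF bas] I_def by simp
  have bI: "b \<in> I \<rightarrow> carrier G" using aI x by (auto simp: b_def)
  have bas': "is_basis G q a I" using bas I_def by simp
  have q0: "0 < q" using q by simp
  have jI: "j \<in> I" by (simp add: I_def)
  have bj: "b j = x" by (simp add: b_def)
  have lcb: "lc G b v I = x [^] v j \<otimes> lc G a v J" for v
  proof -
    have "lc G b v I = b j [^] v j \<otimes> lc G b v J"
      unfolding I_def using bI finJ jJ I_def by (intro lc_insert) auto
    also have "lc G b v J = lc G a v J"
      using aI jJ by (intro lc_cong) (auto simp: b_def I_def)
    finally show ?thesis by (simp only: bj)
  qed
  have lcJ: "lc G a v J = lc G a (v(j := 0)) I" for v
    unfolding I_def using finJ jJ aI I_def by (intro lc_upd0) auto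
  have coJ: "co G q a I (lc G a v J) j = 0" for v
    using lcJ basis_co_lc_gen[OF bas' q0] jI by simp
  obtain d where d: "(c0 * d) mod q = 1" using coprime_inverse_mod cop q c0_def I_def by blast
  have inj: "inj_on (\<lambda>v. lc G b v I) (coeffs q I)"
  proof (rule inj_onI)
    fix v w assume v: "v \<in> coeffs q I" and w: "w \<in> coeffs q I"
      and eq: "lc G b v I = lc G b w I"
    have eq2: "x [^] v j \<otimes> lc G a v J = x [^] w j \<otimes> lc G a w J" using eq lcb by simp
    have aJ: "a \<in> J \<rightarrow> carrier G" using aI I_def by auto
    have "co G q a I (x [^] v j \<otimes> lc G a v J) j = (v j * c0) mod q" for v
    proof -
      have L: "lc G a v J \<in> carrier G" using aJ by simp
      have "co G q a I (x [^] v j \<otimes> lc G a v J) j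
          = (co G q a I (x [^] v j) j + co G q a I (lc G a v J) j) mod q"
        using co_mult[OF bas' q0 nat_pow_closed[OF x] L] jI by simp
      also have "co G q a I (x [^] v j) j = (v j * c0) mod q"
        using co_pow[OF bas' q0 x] jI c0_def by simp
      also have "co G q a I (lc G a v J) j = 0" by (rule coJ)
      finally show ?thesis by simp
    qed
    then have "(v j * c0) mod q = (w j * c0) mod q" using eq2 by metis
    then have "v j mod q = w j mod q" using d by (rule mod_cancel_aux)
    moreover have "v j < q" "w j < q" using v w jI by (auto simp: coeffs_def)
    ultimately have vjw: "v j = w j" by simp
    then have "lc G a v J = lc G a w J" using eq2 x aJ by (auto intro: l_cancel)
    then have "co G q a I (lc G a (v(j := 0)) I) = co G q a I (lc G a (w(j := 0)) I)"
      using lcJ by simp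
    then have "(\<lambda>i\<in>I. (v(j:=0)) i mod q) = (\<lambda>i\<in>I. (w(j:=0)) i mod q)"
      using basis_co_lc_gen[OF bas' q0] by simp
    then have "\<forall>i\<in>J. v i mod q = w i mod q"
    proof (intro ballI)
      fix i assume i: "i \<in> J"
      assume E: "(\<lambda>i\<in>I. (v(j:=0)) i mod q) = (\<lambda>i\<in>I. (w(j:=0)) i mod q)"
      have "(\<lambda>i\<in>I. (v(j:=0)) i mod q) i = (\<lambda>i\<in>I. (w(j:=0)) i mod q) i" using E by simp
      moreover have "i \<in> I" "i \<noteq> j" using i jJ I_def by auto
      ultimately show "v i mod q = w i mod q" by simp
    qed
    moreover have "\<forall>i\<in>J. v i < q \<and> w i < q" using v w I_def by (auto simp: coeffs_def)
    ultimately have "\<forall>i\<in>I. v i = w i" using vjw I_def by auto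
    then show "v = w" using v w by (auto simp: coeffs_def PiE_iff intro: extensionalityI)
  qed
  define u where "u = co G q a I x"
  define z where "z = lc G a u J"
  have zc: "z \<in> carrier G" using aI I_def by (auto simp: z_def)
  have xdec: "x = a j [^] c0 \<otimes> z"
    using basis_co(2)[OF bas' x] lc_insert[OF finJ jJ, of a u] aI I_def
    by (simp add: u_def z_def c0_def)
  have invz: "inv z = z [^] (q - 1)"
  proof -
    have "z [^] (q - 1) \<otimes> z = z [^] q" using zc q by (metis Suc_diff_1 nat_pow_Suc q0)
    also have "\<dots> = \<one>" using basis_exp[OF bas' zc] .
    finally show ?thesis using zc by (metis inv_equality nat_pow_closed)
  qed
  have ajc: "a j [^] c0 = x \<otimes> inv z"
  proof -
    have aj: "a j [^] c0 \<in> carrier G" using aI jI by auto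
    have "x \<otimes> inv z = a j [^] c0 \<otimes> (z \<otimes> inv z)" using xdec zc aj by (simp add: m_assoc)
    then show ?thesis using zc aj by simp
  qed
  define v1 where "v1 = (\<lambda>i. if i = j then (1::nat) else (q - 1) * u i)"
  have "a j [^] c0 = lc G b v1 I"
  proof -
    have "lc G b v1 I = x [^] (1::nat) \<otimes> lc G a v1 J" by (simp add: lcb v1_def)
    also have "lc G a v1 J = lc G a (\<lambda>i. (q - 1) * u i) J"
      using aI I_def jJ by (intro lc_cong) (auto simp: v1_def)
    also have "\<dots> = z [^] (q - 1)" using aI I_def by (simp add: z_def lc_pow)
    finally show ?thesis using ajc invz x by simp
  qed
  moreover have "a j = (a j [^] c0) [^] d"
  proof -
    have aj: "a j \<in> carrier G" using aI jI by auto
    have "(a j [^] c0) [^] d = a j [^] (c0 * d)" using aj by (simp add: nat_pow_pow)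
    also have "\<dots> = a j [^] ((c0 * d) mod q)" using aj basis_exp[OF bas' aj] by (rule pow_mod_exp)
    finally show ?thesis using d aj by simp
  qed
  ultimately have ajb: "a j = lc G b (\<lambda>i. d * v1 i) I" using bI by (simp add: lc_pow)
  have span: "\<exists>v. y = lc G b v I" if y: "y \<in> carrier G" for y
  proof -
    define w where "w = co G q a I y"
    have "y = a j [^] w j \<otimes> lc G a w J"
      using basis_co(2)[OF bas' y] lc_insert[OF finJ jJ, of a w] aI I_def by (simp add: w_def)
    also have "a j [^] w j = lc G b (\<lambda>i. w j * (d * v1 i)) I"
      using ajb bI by (simp add: lc_pow)
    also have "lc G a w J = lc G b (w(j := 0)) I"
    proof -
      have e1: "lc G b (w(j := 0)) I = x [^] (0::nat) \<otimes> lc G a (w(j:=0)) J" by (simp add: lcb)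
      have e2: "lc G a (w(j:=0)) J = lc G a w J" using aI I_def jJ by (intro lc_cong) auto
      have e3: "lc G a w J \<in> carrier G" using aI I_def by auto
      show ?thesis using e1 e2 e3 by (metis l_one nat_pow_0)
    qed
    finally have "y = lc G b (\<lambda>i. w j * (d * v1 i) + (w(j:=0)) i) I" using bI by (simp add: lc_mult)
    then show ?thesis by blast
  qed
  have "carrier G \<subseteq> (\<lambda>v. lc G b v I) ` coeffs q I"
    using lc_span_basis[OF bas' q0 span bI] by blast
  moreover have "(\<lambda>v. lc G b v I) ` coeffs q I \<subseteq> carrier G" using bI by auto
  ultimately have "bij_betw (\<lambda>v. lc G b v I) (coeffs q I) (carrier G)"
    using inj by (auto simp: bij_betw_def)
  then show ?thesis using finI bI bas' unfolding is_basis_def b_def I_def by auto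
qed

end


lemma arith_aux2: assumes "(l1::nat) < q" "l2 < q" shows "(q - (l1+l2) mod q) mod q = (q - l1 + (q - l2)) mod q"
proof (cases "l1 + l2 < q")
  case True
  then have "(l1+l2) mod q = l1 + l2" by simp
  moreover have "q - l1 + (q - l2) = q + (q - (l1 + l2))" using True by simp
  ultimately show ?thesis by simp
next
  case False
  then have "(l1+l2) mod q = l1 + l2 - q" using assms by (simp add: mod_if)
  moreover have "q - l1 + (q - l2) = q - (l1 + l2 - q)" using False assms by simp
  ultimately show ?thesis by simp
qed

lemma arith_aux1: assumes "(l::nat) < q" shows "(l + (q - l) mod q) mod q = 0"
proof (cases "l = 0")
  case True then show ?thesis by simp
next
  case False
  then have "(q - l) mod q = q - l" using assms by simp
  then show ?thesis using assms by simp
qed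

context comm_group
begin

lemma diag_step:
  assumes bas: "is_basis G q b (insert j J)" and jJ: "j \<notin> J" and q: "1 < q"
    and f: "f \<in> hom G G" and idem: "\<And>y. y \<in> carrier G \<Longrightarrow> f (f y) = f y"
    and fx: "f (b j) = b j"
    and IH: "\<And>(A::('a,'b) monoid_scheme) a e. comm_group A \<Longrightarrow> is_basis A q a J \<Longrightarrow> e \<in> hom A A
       \<Longrightarrow> (\<And>y. y \<in> carrier A \<Longrightarrow> e (e y) = e y)
       \<Longrightarrow> \<exists>c. is_basis A q c J \<and> (\<forall>i\<in>J. e (c i) = c i \<or> e (c i) = \<one>\<^bsub>A\<^esub>)"
  shows "\<exists>c. is_basis G q c (insert j J) \<and> (\<forall>i\<in>insert j J. f (c i) = c i \<or> f (c i) = \<one>)"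
proof -
  define I where "I = insert j J"
  define x where "x = b j"
  have bas': "is_basis G q b I" using bas I_def by simp
  have q0: "0 < q" using q by simp
  have jI: "j \<in> I" by (simp add: I_def)
  have finI: "finite I" using basis_finite[OF bas'] .
  have finJ: "finite J" using finI I_def by simp
  have bI: "b \<in> I \<rightarrow> carrier G" using basis_funcset[OF bas'] .
  have bJ: "b \<in> J \<rightarrow> carrier G" using bI I_def by auto
  have xc: "x \<in> carrier G" using bI jI x_def by auto
  have expq: "\<And>y. y \<in> carrier G \<Longrightarrow> y [^] q = \<one>" using basis_exp[OF bas'] .
  interpret fh: group_hom G G f using f is_group by (simp add: group_hom_def group_hom_axioms_def)
  have fc: "\<And>y. y \<in> carrier G \<Longrightarrow> f y \<in> carrier G" using f by (auto simp: hom_def)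
  have fx': "f x = x" using fx x_def by simp
  define lam where "lam y = co G q b I (f y) j" for y
  have lam_lt: "\<And>y. y \<in> carrier G \<Longrightarrow> lam y < q"
    using co_lt[OF bas'] fc jI lam_def by auto
  have lam_mult: "\<And>y z. y \<in> carrier G \<Longrightarrow> z \<in> carrier G \<Longrightarrow> lam (y \<otimes> z) = (lam y + lam z) mod q"
    using co_mult[OF bas' q0] fc jI by (simp add: lam_def)
  have lam_f: "\<And>y. y \<in> carrier G \<Longrightarrow> lam (f y) = lam y" using idem by (simp add: lam_def)
  have lam_xpow: "lam (x [^] (m::nat)) = m mod q" for m
  proof -
    have "f (x [^] m) = x [^] m" using fx' xc by (simp add: fh.hom_nat_pow)
    then have "lam (x [^] m) = co G q b I (x [^] m) j" by (simp add: lam_def)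
    also have "\<dots> = (m * co G q b I x j) mod q" using co_pow[OF bas' q0 xc] jI by simp
    also have "co G q b I x j = 1" using co_basis_vec[OF bas' q jI] x_def jI by simp
    finally show ?thesis by simp
  qed
  have lam_one: "lam \<one> = 0" using co_one[OF bas' q0] jI by (simp add: lam_def)
  define pi where "pi y = y \<otimes> x [^] (q - lam y)" for y
  define K where "K = {y \<in> carrier G. lam y = 0}"
  have pic: "\<And>y. y \<in> carrier G \<Longrightarrow> pi y \<in> carrier G" using xc by (simp add: pi_def)
  have piK: "\<And>y. y \<in> carrier G \<Longrightarrow> pi y \<in> K"
  proof -
    fix y assume y: "y \<in> carrier G"
    have "lam (pi y) = (lam y + (q - lam y) mod q) mod q"
      using lam_mult[OF y nat_pow_closed[OF xc]] lam_xpow by (simp add: pi_def)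
    also have "\<dots> = 0" using lam_lt[OF y] by (rule arith_aux1)
    finally show "pi y \<in> K" using pic[OF y] by (simp add: K_def)
  qed
  have piid: "\<And>y. y \<in> K \<Longrightarrow> pi y = y"
    using expq xc by (auto simp: pi_def K_def)
  have KG: "K \<subseteq> carrier G" by (auto simp: K_def)
  have pix: "pi x = \<one>"
  proof -
    have "lam x = 1" using lam_xpow[of 1] q xc by simp
    then have "pi x = x \<otimes> x [^] (q - 1)" by (simp add: pi_def)
    also have "\<dots> = x [^] q" using xc q by (metis Suc_diff_1 nat_pow_Suc2 q0)
    finally show ?thesis using expq xc by simp
  qed
  have pi_mult: "\<And>y z. y \<in> carrier G \<Longrightarrow> z \<in> carrier G \<Longrightarrow> pi (y \<otimes> z) = pi y \<otimes> pi z"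
  proof -
    fix y z assume y: "y \<in> carrier G" and z: "z \<in> carrier G"
    have "pi (y \<otimes> z) = y \<otimes> z \<otimes> x [^] (q - (lam y + lam z) mod q)"
      using lam_mult[OF y z] by (simp add: pi_def)
    also have "x [^] (q - (lam y + lam z) mod q) = x [^] ((q - (lam y + lam z) mod q) mod q)"
      using xc expq[OF xc] by (rule pow_mod_exp)
    also have "\<dots> = x [^] ((q - lam y + (q - lam z)) mod q)"
      using arith_aux2[OF lam_lt[OF y] lam_lt[OF z]] by simp
    also have "\<dots> = x [^] (q - lam y + (q - lam z))"
      using xc expq[OF xc] by (rule pow_mod_exp[symmetric])
    also have "\<dots> = x [^] (q - lam y) \<otimes> x [^] (q - lam z)" using xc by (simp add: nat_pow_mult)
    finally show "pi (y \<otimes> z) = pi y \<otimes> pi z" using y z xc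
      by (simp add: pi_def m_ac)
  qed
  have pi_hom: "pi \<in> hom G G" using pic pi_mult by (auto simp: hom_def)
  interpret ph: group_hom G G pi using pi_hom is_group by (simp add: group_hom_def group_hom_axioms_def)
  have f_pi: "\<And>y. y \<in> carrier G \<Longrightarrow> f (pi y) = pi (f y)"
    using lam_f fx' xc by (simp add: pi_def fh.hom_nat_pow)
  have subK: "subgroup K G"
  proof (rule subgroupI)
    show "K \<subseteq> carrier G" by (rule KG)
    show "K \<noteq> {}" using lam_one by (auto simp: K_def)
    show "\<And>a. a \<in> K \<Longrightarrow> inv a \<in> K"
    proof -
      fix a assume a: "a \<in> K"
      have ac: "a \<in> carrier G" using a KG by auto
      have "0 = lam (a \<otimes> inv a)" using lam_one ac by simp
      also have "\<dots> = (lam a + lam (inv a)) mod q" using lam_mult[OF ac inv_closed[OF ac]] .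
      also have "\<dots> = lam (inv a)" using a lam_lt[of "inv a"] ac by (simp add: K_def)
      finally show "inv a \<in> K" using ac by (simp add: K_def)
    qed
    show "\<And>a b. a \<in> K \<Longrightarrow> b \<in> K \<Longrightarrow> a \<otimes> b \<in> K"
      using lam_mult by (auto simp: K_def)
  qed
  define H where "H = G\<lparr>carrier := K\<rparr>"
  interpret H: comm_group H unfolding H_def using subK by (rule subgroup_comm_group)
  have Hpow: "\<And>y (n::nat). y [^]\<^bsub>H\<^esub> n = y [^] n" by (simp add: H_def nat_pow_def)
  define c0 where "c0 = (\<lambda>i. pi (b i))"
  have c0K: "c0 \<in> J \<rightarrow> K" using piK bJ by (auto simp: c0_def Pi_iff)
  have lcH: "\<And>v. lc H c0 v J = pi (lc G b v J)"
    using lc_subgroup[OF subK finJ c0K] lc_hom[OF comm_group_axioms pi_hom finJ bJ]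
    by (simp add: H_def c0_def)
  have lcI: "\<And>v t. lc G b (v(j := t)) I = x [^] t \<otimes> lc G b v J"
  proof -
    fix v t
    have "lc G b (v(j := t)) I = b j [^] (v(j:=t)) j \<otimes> lc G b (v(j:=t)) J"
      unfolding I_def using finJ jJ bI I_def by (intro lc_insert) auto
    also have "lc G b (v(j:=t)) J = lc G b v J" using jJ bJ by (intro lc_cong) auto
    finally show "lc G b (v(j := t)) I = x [^] t \<otimes> lc G b v J" by (simp only: x_def fun_upd_same)
  qed
  have basH: "is_basis H q c0 J"
  proof -
    have inj: "inj_on (\<lambda>v. lc H c0 v J) (coeffs q J)"
    proof (rule inj_onI)
      fix v w assume v: "v \<in> coeffs q J" and w: "w \<in> coeffs q J"
        and "lc H c0 v J = lc H c0 w J"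
      then have "pi (lc G b v J) = pi (lc G b w J)" by (simp add: lcH)
      then have "lc G b (v(j := q - lam (lc G b v J))) I = lc G b (w(j := q - lam (lc G b w J))) I"
        using bJ xc by (simp add: lcI pi_def m_comm)
      then have E: "(\<lambda>i\<in>I. (v(j := q - lam (lc G b v J))) i mod q) = (\<lambda>i\<in>I. (w(j := q - lam (lc G b w J))) i mod q)"
        using basis_co_lc_gen[OF bas' q0] by metis
      have "v i = w i" if i: "i \<in> J" for i
      proof -
        have "(\<lambda>i\<in>I. (v(j := q - lam (lc G b v J))) i mod q) i = (\<lambda>i\<in>I. (w(j := q - lam (lc G b w J))) i mod q) i"
          using E by simp
        moreover have "i \<in> I" "i \<noteq> j" using i jJ I_def by auto
        ultimately have "v i mod q = w i mod q" by simp
        moreover have "v i < q" "w i < q" using v w i by (auto simp: coeffs_def)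
        ultimately show ?thesis by simp
      qed
      then show "v = w" using v w by (auto simp: coeffs_def PiE_iff intro: extensionalityI)
    qed
    have surj: "carrier H \<subseteq> (\<lambda>v. lc H c0 v J) ` coeffs q J"
    proof
      fix y assume "y \<in> carrier H"
      then have yK: "y \<in> K" by (simp add: H_def)
      have y: "y \<in> carrier G" using yK KG by auto
      define w where "w = co G q b I y"
      have "y = lc G b (w(j := w j)) I" using basis_co(2)[OF bas' y] by (simp add: w_def)
      also have "\<dots> = x [^] w j \<otimes> lc G b w J" by (rule lcI)
      finally have "y = x [^] w j \<otimes> lc G b w J" .
      then have "pi y = pi x [^] w j \<otimes> pi (lc G b w J)"
        using xc bJ by (simp add: ph.hom_nat_pow)
      then have "y = pi (lc G b w J)" using piid[OF yK] pix bJ pic by simp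
      also have "\<dots> = lc H c0 w J" by (simp add: lcH)
      also have "\<dots> = lc H c0 (restrict w J) J"
        using c0K by (intro H.lc_cong) (auto simp: H_def)
      finally have "y = lc H c0 (restrict w J) J" .
      moreover have "restrict w J \<in> coeffs q J"
        using basis_co(1)[OF bas' y] I_def by (auto simp: coeffs_def w_def)
      ultimately show "y \<in> (\<lambda>v. lc H c0 v J) ` coeffs q J" by blast
    qed
    have c0H: "c0 \<in> J \<rightarrow> carrier H" using c0K by (simp add: H_def)
    have "(\<lambda>v. lc H c0 v J) ` coeffs q J \<subseteq> carrier H"
      using H.lc_closed[OF c0H] by auto
    then have "bij_betw (\<lambda>v. lc H c0 v J) (coeffs q J) (carrier H)"
      using inj surj by (auto simp: bij_betw_def)
    moreover have "\<forall>y\<in>carrier H. y [^]\<^bsub>H\<^esub> q = \<one>\<^bsub>H\<^esub>"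
      unfolding Hpow using expq KG by (auto simp: H_def)
    ultimately show ?thesis using finJ c0K by (simp add: is_basis_def H_def)
  qed
  have fH: "f \<in> hom H H"
  proof -
    have "f y \<in> K" if "y \<in> K" for y using that lam_f fc KG by (auto simp: K_def)
    then show ?thesis using KG by (auto simp: hom_def H_def subset_iff)
  qed
  obtain c where basc: "is_basis H q c J" and diagc: "\<forall>i\<in>J. f (c i) = c i \<or> f (c i) = \<one>\<^bsub>H\<^esub>"
    using IH[OF H.comm_group_axioms basH fH] idem KG by (auto simp: H_def)
  have cK: "c \<in> J \<rightarrow> K" using basc by (simp add: is_basis_def H_def)
  define c' where "c' = c(j := x)"
  have c'I: "c' \<in> I \<rightarrow> carrier G" using cK KG xc by (auto simp: c'_def I_def)
  have lcc: "lc G c' v I = x [^] v j \<otimes> lc H c v J" for v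
  proof -
    have "lc G c' v I = c' j [^] v j \<otimes> lc G c' v J"
      unfolding I_def using finJ jJ c'I I_def by (intro lc_insert) auto
    also have "lc G c' v J = lc G c v J" using jJ cK KG by (intro lc_cong) (auto simp: c'_def)
    also have "\<dots> = lc H c v J" using lc_subgroup[OF subK finJ cK] by (simp add: H_def)
    moreover have "c' j = x" by (simp add: c'_def)
    ultimately show ?thesis by simp
  qed
  have cH: "c \<in> J \<rightarrow> carrier H" using cK by (simp add: H_def)
  have lcHK: "lc H c v J \<in> K" for v using H.lc_closed[OF cH] by (simp add: H_def)
  have lam_dec: "lam (x [^] m \<otimes> k) = m" if "m < q" "k \<in> K" for m k
    using lam_mult[OF nat_pow_closed[OF xc]] lam_xpow that KG by (auto simp: K_def)
  have inj: "inj_on (\<lambda>v. lc G c' v I) (coeffs q I)"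
  proof (rule inj_onI)
    fix v w assume v: "v \<in> coeffs q I" and w: "w \<in> coeffs q I"
      and eq: "lc G c' v I = lc G c' w I"
    have vq: "v j < q" "w j < q" using v w jI by (auto simp: coeffs_def)
    have eq2: "x [^] v j \<otimes> lc H c v J = x [^] w j \<otimes> lc H c w J" using eq lcc by simp
    then have vjw: "v j = w j" using lam_dec[OF vq(1) lcHK] lam_dec[OF vq(2) lcHK] by metis
    have m1: "lc H c v J \<in> carrier G" "lc H c w J \<in> carrier G" using lcHK KG by auto
    have "lc H c v J = lc H c w J"
      using l_cancel[OF _ m1 nat_pow_closed[OF xc, of "w j"]] eq2 vjw by simp
    moreover have "lc H c (restrict v J) J = lc H c v J" "lc H c (restrict w J) J = lc H c w J"
      using cH by (auto intro: H.lc_cong)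
    ultimately have "lc H c (restrict v J) J = lc H c (restrict w J) J" by simp
    moreover have "restrict v J \<in> coeffs q J" "restrict w J \<in> coeffs q J"
      using v w I_def by (auto simp: coeffs_def)
    ultimately have "restrict v J = restrict w J"
      using basc H.basis_bij by (metis bij_betw_def inj_onD)
    then have "\<forall>i\<in>I. v i = w i" using vjw I_def by (metis insert_iff restrict_apply')
    then show "v = w" using v w by (auto simp: coeffs_def PiE_iff intro: extensionalityI)
  qed
  have surj: "carrier G \<subseteq> (\<lambda>v. lc G c' v I) ` coeffs q I"
  proof
    fix y assume y: "y \<in> carrier G"
    have "pi y \<in> carrier H" using piK[OF y] by (simp add: H_def)
    then obtain w where w: "w \<in> coeffs q J" "pi y = lc H c w J"
      using basc H.basis_bij by (metis bij_betw_def imageE)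
    define v where "v = (\<lambda>i\<in>I. if i = j then lam y else w i)"
    have vc: "v \<in> coeffs q I" using w(1) lam_lt[OF y] by (auto simp: v_def coeffs_def I_def)
    have "lc G c' v I = x [^] lam y \<otimes> lc H c v J" by (simp add: lcc v_def jI)
    also have "lc H c v J = lc H c w J" using cK jJ by (intro H.lc_cong) (auto simp: v_def I_def H_def)
    also have "\<dots> = pi y" using w by simp
    also have "x [^] lam y \<otimes> pi y = y"
    proof -
      have "x [^] lam y \<otimes> pi y = y \<otimes> (x [^] (q - lam y) \<otimes> x [^] lam y)"
        using y xc by (simp add: pi_def m_ac)
      also have "\<dots> = y \<otimes> x [^] q" using xc lam_lt[OF y] by (simp add: nat_pow_mult)
      finally show ?thesis using expq xc y by simp
    qed
    finally show "y \<in> (\<lambda>v. lc G c' v I) ` coeffs q I" using vc by force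
  qed
  have "(\<lambda>v. lc G c' v I) ` coeffs q I \<subseteq> carrier G" using c'I by auto
  then have "bij_betw (\<lambda>v. lc G c' v I) (coeffs q I) (carrier G)"
    using inj surj by (auto simp: bij_betw_def)
  then have "is_basis G q c' I" using finI c'I expq by (simp add: is_basis_def)
  moreover have "\<forall>i\<in>I. f (c' i) = c' i \<or> f (c' i) = \<one>"
    using diagc fx' jJ by (auto simp: c'_def I_def H_def)
  ultimately show ?thesis using I_def by blast
qed

end


lemma not_coprime_prime_power:
  fixes p c k :: nat
  assumes "Factorial_Ring.prime p" "\<not> coprime c (p ^ k)"
  shows "p dvd c"
  using assms by (metis coprime_commute coprime_power_right_iff prime_imp_coprime)

context comm_group
begin

lemma diag_insert:
  assumes pr: "Factorial_Ring.prime p" and qk: "q = p ^ k" and k1: "k \<ge> 1"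
    and finJ: "finite J" and jJ: "j \<notin> J"
    and IH: "\<And>(A::('a,'b) monoid_scheme) a e. comm_group A \<Longrightarrow> is_basis A q a J \<Longrightarrow> e \<in> hom A A
       \<Longrightarrow> (\<And>y. y \<in> carrier A \<Longrightarrow> e (e y) = e y)
       \<Longrightarrow> \<exists>c. is_basis A q c J \<and> (\<forall>i\<in>J. e (c i) = c i \<or> e (c i) = \<one>\<^bsub>A\<^esub>)"
    and basa: "is_basis G q a (insert j J)" and eh: "e \<in> hom G G"
    and eidem: "\<And>y. y \<in> carrier G \<Longrightarrow> e (e y) = e y"
  shows "\<exists>c. is_basis G q c (insert j J) \<and> (\<forall>i\<in>insert j J. e (c i) = c i \<or> e (c i) = \<one>)"
proof -
  have p1: "1 < p" using pr prime_gt_1_nat by blast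
  have q: "1 < q" using one_less_power[OF p1, of k] qk k1 by simp
  have q0: "0 < q" using q by simp
  define I where "I = insert j J"
  have bas: "is_basis G q a I" using basa I_def by simp
  have jI: "j \<in> I" by (simp add: I_def)
  have aj: "a j \<in> carrier G" using basis_funcset[OF bas] jI by auto
  interpret ehh: group_hom G G e using eh is_group by (simp add: group_hom_def group_hom_axioms_def)
  have ec: "\<And>y. y \<in> carrier G \<Longrightarrow> e y \<in> carrier G" using eh by (auto simp: hom_def)
  define y0 where "y0 = e (a j)"
  define y1 where "y1 = a j \<otimes> inv y0"
  have y0c: "y0 \<in> carrier G" using ec aj y0_def by simp
  have y1c: "y1 \<in> carrier G" using y0c aj y1_def by simp
  have "y1 \<otimes> y0 = a j" using y0c aj by (simp add: y1_def m_assoc)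
  then have "co G q a I (a j) j = (co G q a I y1 j + co G q a I y0 j) mod q"
    using co_mult[OF bas q0 y1c y0c] jI by simp
  then have sum1: "(co G q a I y1 j + co G q a I y0 j) mod q = 1"
    using co_basis_vec[OF bas q jI] jI by simp
  have cop: "coprime (co G q a I y0 j) q \<or> coprime (co G q a I y1 j) q"
  proof (rule ccontr)
    assume "\<not> ?thesis"
    then have "p dvd co G q a I y0 j" "p dvd co G q a I y1 j"
      using not_coprime_prime_power pr qk by blast+
    then have "p dvd (co G q a I y1 j + co G q a I y0 j)" by simp
    moreover have "p dvd q" using qk k1 by (simp add: dvd_power)
    ultimately have "p dvd (co G q a I y1 j + co G q a I y0 j) mod q"
      by (simp add: dvd_mod)
    then have "p dvd 1" using sum1 by simp
    then show False using pr by simp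
  qed
  show ?thesis
  proof (cases "coprime (co G q a I y0 j) q")
    case True
    have basb: "is_basis G q (a(j := y0)) (insert j J)"
      using exchange[OF basa jJ q y0c] True I_def by simp
    have fx0: "e ((a(j := y0)) j) = (a(j := y0)) j" using eidem[OF aj] by (simp add: y0_def)
    show ?thesis
      by (rule diag_step[OF basb jJ q eh]) (erule eidem, rule fx0, rule IH, assumption+)
  next
    case False
    then have cop1: "coprime (co G q a I y1 j) q" using cop by simp
    define e' where "e' = (\<lambda>y. y \<otimes> inv (e y))"
    have e'c: "\<And>y. y \<in> carrier G \<Longrightarrow> e' y \<in> carrier G" using ec by (simp add: e'_def)
    have e'hom: "e' \<in> hom G G"
    proof (rule homI)
      fix y z assume y: "y \<in> carrier G" and z: "z \<in> carrier G"
      show "e' (y \<otimes> z) = e' y \<otimes> e' z"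
        using y z ec by (simp add: e'_def inv_mult m_ac)
    qed (rule e'c)
    have ee': "\<And>y. y \<in> carrier G \<Longrightarrow> e (e' y) = \<one>"
      using ec eidem by (simp add: e'_def)
    have e'idem: "\<And>y. y \<in> carrier G \<Longrightarrow> e' (e' y) = e' y"
      using ee' e'c by (simp add: e'_def)
    have e'y1: "e' y1 = y1"
    proof -
      have "y1 = e' (a j)" by (simp add: e'_def y1_def y0_def)
      then show ?thesis using e'idem aj by simp
    qed
    have basb: "is_basis G q (a(j := y1)) (insert j J)"
      using exchange[OF basa jJ q y1c] cop1 I_def by simp
    have fx1: "e' ((a(j := y1)) j) = (a(j := y1)) j" using e'y1 by simp
    have "\<exists>c. is_basis G q c (insert j J) \<and> (\<forall>i\<in>insert j J. e' (c i) = c i \<or> e' (c i) = \<one>)"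
      by (rule diag_step[OF basb jJ q e'hom]) (erule e'idem, rule fx1, rule IH, assumption+)
    then obtain c where c: "is_basis G q c (insert j J)"
      "\<forall>i\<in>insert j J. e' (c i) = c i \<or> e' (c i) = \<one>" by blast
    have cc: "\<And>i. i \<in> insert j J \<Longrightarrow> c i \<in> carrier G" using basis_funcset[OF c(1)] by auto
    have "\<forall>i\<in>insert j J. e (c i) = c i \<or> e (c i) = \<one>"
    proof
      fix i assume i: "i \<in> insert j J"
      have ci: "c i \<in> carrier G" using cc[OF i] .
      have eci: "e (c i) \<in> carrier G" using ec[OF ci] .
      show "e (c i) = c i \<or> e (c i) = \<one>"
      proof (cases "e' (c i) = c i")
        case True
        then have "c i \<otimes> inv (e (c i)) = c i \<otimes> \<one>" using ci by (simp add: e'_def)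
        then have "inv (e (c i)) = \<one>" using ci eci by (metis inv_closed l_cancel one_closed)
        then show ?thesis using eci by (metis inv_inv inv_one)
      next
        case False
        moreover have "e' (c i) = c i \<or> e' (c i) = \<one>" using c(2) i by blast
        ultimately have "e' (c i) = \<one>" by blast
        then have "c i \<otimes> inv (e (c i)) = \<one>" by (simp add: e'_def)
        then have "c i = e (c i)" using ci eci by (metis inv_closed inv_equality inv_inv)
        then show ?thesis by simp
      qed
    qed
    then show ?thesis using c(1) by blast
  qed
qed

end


lemma diag_exists:
  fixes A :: "('a,'b) monoid_scheme"
  assumes "finite J" "Factorial_Ring.prime p" "q = p ^ k" "k \<ge> 1"
  shows "comm_group A \<Longrightarrow> is_basis A q a J \<Longrightarrow> e \<in> hom A A \<Longrightarrow> (\<And>y. y \<in> carrier A \<Longrightarrow> e (e y) = e y)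
    \<Longrightarrow> \<exists>c. is_basis A q c J \<and> (\<forall>i\<in>J. e (c i) = c i \<or> e (c i) = \<one>\<^bsub>A\<^esub>)"
  using assms(1)
proof (induct J arbitrary: A a e rule: finite_induct)
  case empty
  then show ?case by blast
next
  case (insert j J)
  show ?case
    by (rule comm_group.diag_insert[OF insert(4) assms(2,3,4) insert(1,2) _ insert(5,6,7)]) (rule insert(3), assumption+)
qed


lemma perm_exists:
  assumes "finite I" "S \<subseteq> I" "S' \<subseteq> I" "card S = card S'"
  shows "\<exists>\<sigma>. bij_betw \<sigma> I I \<and> (\<forall>j\<in>I. \<sigma> j \<in> S \<longleftrightarrow> j \<in> S')"
proof -
  have fS: "finite S" "finite S'" using assms finite_subset by auto
  obtain g where g: "bij_betw g S' S" using finite_same_card_bij[OF fS(2,1)] assms(4) by metis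
  have "card (I - S') = card (I - S)" using assms fS by (simp add: card_Diff_subset)
  then obtain h where h: "bij_betw h (I - S') (I - S)"
    using finite_same_card_bij[of "I - S'" "I - S"] assms by auto
  define \<sigma> where "\<sigma> j = (if j \<in> S' then g j else h j)" for j
  have "bij_betw \<sigma> S' S" using g by (rule bij_betw_cong[THEN iffD1, rotated]) (simp add: \<sigma>_def)
  moreover have "bij_betw \<sigma> (I - S') (I - S)" using h
    by (rule bij_betw_cong[THEN iffD1, rotated]) (simp add: \<sigma>_def)
  ultimately have "bij_betw \<sigma> (S' \<union> (I - S')) (S \<union> (I - S))"
    by (intro bij_betw_combine) auto
  moreover have "S' \<union> (I - S') = I" "S \<union> (I - S) = I" using assms by auto
  ultimately have b: "bij_betw \<sigma> I I" by simp
  have "\<forall>j\<in>I. \<sigma> j \<in> S \<longleftrightarrow> j \<in> S'"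
  proof
    fix j assume j: "j \<in> I"
    show "\<sigma> j \<in> S \<longleftrightarrow> j \<in> S'"
    proof (cases "j \<in> S'")
      case True then show ?thesis using g by (auto simp: \<sigma>_def bij_betw_def)
    next
      case False then have "h j \<in> I - S" using h j by (auto simp: bij_betw_def)
      then show ?thesis using False by (simp add: \<sigma>_def)
    qed
  qed
  then show ?thesis using b by blast
qed

context comm_group
begin

lemma lc_mod':
  assumes "is_basis G q b I"
  shows "lc G b (\<lambda>i. v i mod q) I = lc G b v I"
proof -
  have e: "\<And>i. i \<in> I \<Longrightarrow> b i [^] q = \<one>" using basis_exp[OF assms] basis_funcset[OF assms] by auto
  show ?thesis
    using lc_mod[OF e basis_funcset[OF assms], of "\<lambda>i. v i mod q"] lc_mod[OF e basis_funcset[OF assms], of v]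
    by simp
qed

lemma diag_apply:
  assumes bas: "is_basis G q c I" and f: "f \<in> hom G G"
    and diag: "\<forall>i\<in>I. f (c i) = c i \<or> f (c i) = \<one>"
  shows "f (lc G c v I) = lc G c (\<lambda>i. if f (c i) = c i then v i else 0) I"
proof -
  have "f (lc G c v I) = lc G (\<lambda>i. f (c i)) v I"
    using lc_hom[OF comm_group_axioms f basis_finite[OF bas] basis_funcset[OF bas]] .
  also have "\<dots> = lc G c (\<lambda>i. if f (c i) = c i then v i else 0) I"
    unfolding lc_def
  proof (rule finprod_cong')
    show "(\<lambda>i. c i [^] (if f (c i) = c i then v i else 0)) \<in> I \<rightarrow> carrier G"
      using basis_funcset[OF bas] by auto
    fix i assume "i \<in> I"
    then show "f (c i) [^] v i = c i [^] (if f (c i) = c i then v i else 0)"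
      using diag by auto
  qed simp
  finally show ?thesis .
qed

lemma diag_co:
  assumes bas: "is_basis G q c I" and q0: "0 < q" and f: "f \<in> hom G G"
    and diag: "\<forall>i\<in>I. f (c i) = c i \<or> f (c i) = \<one>" and y: "y \<in> carrier G"
  shows "co G q c I (f y) = (\<lambda>i\<in>I. if f (c i) = c i then co G q c I y i else 0)"
proof -
  have "f y = lc G c (\<lambda>i. if f (c i) = c i then co G q c I y i else 0) I"
  proof -
    have "f y = f (lc G c (co G q c I y) I)" using basis_co(2)[OF bas y] by simp
    also have "\<dots> = lc G c (\<lambda>i. if f (c i) = c i then co G q c I y i else 0) I"
      by (rule diag_apply[OF bas f diag])
    finally show ?thesis .
  qed
  then show ?thesis using basis_co_lc_gen[OF bas q0] co_lt[OF bas y] by auto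
qed

lemma diag_card:
  assumes bas: "is_basis G q c I" and q0: "0 < q" and f: "f \<in> hom G G"
    and diag: "\<forall>i\<in>I. f (c i) = c i \<or> f (c i) = \<one>"
  shows "card (f ` carrier G) = q ^ card {i\<in>I. f (c i) = c i}"
proof -
  define S where "S = {i\<in>I. f (c i) = c i}"
  define Z where "Z = {v \<in> coeffs q I. \<forall>i\<in>I - S. v i = 0}"
  have finI: "finite I" using basis_finite[OF bas] .
  have img: "f ` carrier G = (\<lambda>v. lc G c v I) ` Z"
  proof
    show "f ` carrier G \<subseteq> (\<lambda>v. lc G c v I) ` Z"
    proof
      fix z assume "z \<in> f ` carrier G"
      then obtain y where y: "y \<in> carrier G" "z = f y" by blast
      have fy: "f y \<in> carrier G" using f y by (auto simp: hom_def)
      have "z = lc G c (co G q c I (f y)) I" using basis_co(2)[OF bas fy] y by simp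
      moreover have "co G q c I (f y) \<in> Z"
        using diag_co[OF bas q0 f diag y(1)] basis_co(1)[OF bas fy] by (auto simp: Z_def S_def)
      ultimately show "z \<in> (\<lambda>v. lc G c v I) ` Z" by blast
    qed
  next
    show "(\<lambda>v. lc G c v I) ` Z \<subseteq> f ` carrier G"
    proof
      fix z assume "z \<in> (\<lambda>v. lc G c v I) ` Z"
      then obtain v where v: "v \<in> Z" "z = lc G c v I" by blast
      have "f (lc G c v I) = lc G c (\<lambda>i. if f (c i) = c i then v i else 0) I"
        by (rule diag_apply[OF bas f diag])
      also have "\<dots> = lc G c v I"
        using v(1) basis_funcset[OF bas] by (intro lc_cong) (auto simp: Z_def S_def)
      moreover have "lc G c v I \<in> carrier G" using basis_funcset[OF bas] by simp
      ultimately show "z \<in> f ` carrier G" using v(2) by (metis image_eqI)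
    qed
  qed
  have "inj_on (\<lambda>v. lc G c v I) Z"
    using basis_bij[OF bas] by (rule inj_on_subset[OF bij_betw_imp_inj_on]) (auto simp: Z_def)
  then have "card (f ` carrier G) = card Z" using img by (simp add: card_image)
  also have "card Z = card (PiE S (\<lambda>_. {..<q}))"
  proof (rule bij_betw_same_card)
    show "bij_betw (\<lambda>v. restrict v S) Z (PiE S (\<lambda>_. {..<q}))"
    proof (rule bij_betw_byWitness[where f' = "\<lambda>w. \<lambda>i\<in>I. if i \<in> S then w i else 0"])
      show "\<forall>a\<in>Z. (\<lambda>i\<in>I. if i \<in> S then restrict a S i else 0) = a"
      proof
        fix a assume a: "a \<in> Z"
        then have ext: "a \<in> extensional I" and a0: "\<forall>i\<in>I - S. a i = 0"
          by (simp_all add: Z_def coeffs_def PiE_iff)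
        show "(\<lambda>i\<in>I. if i \<in> S then restrict a S i else 0) = a"
        proof (rule extensionalityI[OF restrict_extensional ext])
          fix i assume "i \<in> I"
          then show "(\<lambda>i\<in>I. if i \<in> S then restrict a S i else 0) i = a i" using a0 by auto
        qed
      qed
      show "\<forall>a'\<in>PiE S (\<lambda>_. {..<q}). restrict (\<lambda>i\<in>I. if i \<in> S then a' i else 0) S = a'"
      proof
        fix a' assume a': "a' \<in> PiE S (\<lambda>_. {..<q})"
        then have ext: "a' \<in> extensional S" by (simp add: PiE_iff)
        show "restrict (\<lambda>i\<in>I. if i \<in> S then a' i else 0) S = a'"
        proof (rule extensionalityI[OF restrict_extensional ext])
          fix i assume "i \<in> S"
          then show "restrict (\<lambda>i\<in>I. if i \<in> S then a' i else 0) S i = a' i" by (simp add: S_def)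
        qed
      qed
      show "(\<lambda>v. restrict v S) ` Z \<subseteq> PiE S (\<lambda>_. {..<q})"
      proof (rule image_subsetI)
        fix v assume "v \<in> Z"
        then have "\<forall>i\<in>S. v i \<in> {..<q}" by (auto simp: Z_def coeffs_def S_def PiE_iff)
        then show "restrict v S \<in> PiE S (\<lambda>_. {..<q})" by (simp add: restrict_PiE_iff)
      qed
      show "(\<lambda>w. \<lambda>i\<in>I. if i \<in> S then w i else 0) ` PiE S (\<lambda>_. {..<q}) \<subseteq> Z"
      proof (rule image_subsetI)
        fix w assume w: "w \<in> PiE S (\<lambda>_. {..<q})"
        have "(\<lambda>i\<in>I. if i \<in> S then w i else 0) \<in> coeffs q I"
          unfolding coeffs_def using w q0 by (auto simp: PiE_iff)
        then show "(\<lambda>i\<in>I. if i \<in> S then w i else 0) \<in> Z" by (simp add: Z_def)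
      qed
    qed
  qed
  also have "\<dots> = q ^ card S"
    using finI by (simp add: card_PiE S_def)
  finally show ?thesis by (simp add: S_def)
qed

lemma diag_conj:
  assumes bas: "is_basis G q c I" and bas': "is_basis G q c' I" and q0: "0 < q"
    and f: "f \<in> hom G G" and diag: "\<forall>i\<in>I. f (c i) = c i \<or> f (c i) = \<one>"
    and f': "f' \<in> hom G G" and diag': "\<forall>i\<in>I. f' (c' i) = c' i \<or> f' (c' i) = \<one>"
    and cd: "card {i\<in>I. f (c i) = c i} = card {i\<in>I. f' (c' i) = c' i}"
  shows "\<exists>\<phi>. \<phi> \<in> iso G G \<and> (\<forall>y\<in>carrier G. \<phi> (f y) = f' (\<phi> y))"
proof -
  define S where "S = {i\<in>I. f (c i) = c i}"
  define S' where "S' = {i\<in>I. f' (c' i) = c' i}"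
  have finI: "finite I" using basis_finite[OF bas] .
  obtain \<sigma> where sig: "bij_betw \<sigma> I I" "\<forall>j\<in>I. \<sigma> j \<in> S \<longleftrightarrow> j \<in> S'"
    using perm_exists[OF finI _ _ cd[folded S_def S'_def]] by (auto simp: S_def S'_def)
  have sigI: "\<And>j. j \<in> I \<Longrightarrow> \<sigma> j \<in> I" using sig(1) by (auto simp: bij_betw_def)
  define \<phi> where "\<phi> y = lc G c' (\<lambda>j. co G q c I y (\<sigma> j)) I" for y
  have c'I: "c' \<in> I \<rightarrow> carrier G" using basis_funcset[OF bas'] .
  have phic: "\<And>y. \<phi> y \<in> carrier G" using c'I by (simp add: \<phi>_def)
  have phim: "\<phi> (y \<otimes> z) = \<phi> y \<otimes> \<phi> z" if y: "y \<in> carrier G" and z: "z \<in> carrier G" for y z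
  proof -
    have "\<phi> (y \<otimes> z) = lc G c' (\<lambda>j. (co G q c I y (\<sigma> j) + co G q c I z (\<sigma> j)) mod q) I"
      unfolding \<phi>_def using co_mult[OF bas q0 y z] sigI c'I by (intro lc_cong) auto
    also have "\<dots> = lc G c' (\<lambda>j. co G q c I y (\<sigma> j) + co G q c I z (\<sigma> j)) I"
      using lc_mod'[OF bas'] .
    also have "\<dots> = \<phi> y \<otimes> \<phi> z" unfolding \<phi>_def using c'I by (simp add: lc_mult)
    finally show ?thesis .
  qed
  have phi_hom: "\<phi> \<in> hom G G" using phic phim by (auto simp: hom_def)
  have finG: "finite (carrier G)"
  proof -
    have "finite (coeffs q I)" using finI by (simp add: coeffs_def finite_PiE)
    then show ?thesis using basis_bij[OF bas] bij_betw_finite by blast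
  qed
  have inj: "inj_on \<phi> (carrier G)"
  proof (rule inj_onI)
    fix y z assume y: "y \<in> carrier G" and z: "z \<in> carrier G" and eq: "\<phi> y = \<phi> z"
    have r: "\<And>y. y \<in> carrier G \<Longrightarrow> \<phi> y = lc G c' (\<lambda>j\<in>I. co G q c I y (\<sigma> j)) I"
      unfolding \<phi>_def using c'I by (intro lc_cong) auto
    have mem: "\<And>y. y \<in> carrier G \<Longrightarrow> (\<lambda>j\<in>I. co G q c I y (\<sigma> j)) \<in> coeffs q I"
      using co_lt[OF bas] sigI by (auto simp: coeffs_def)
    have "(\<lambda>j\<in>I. co G q c I y (\<sigma> j)) = (\<lambda>j\<in>I. co G q c I z (\<sigma> j))"
      using inj_onD[OF bij_betw_imp_inj_on[OF basis_bij[OF bas']] _ mem[OF y] mem[OF z]] eq r[OF y] r[OF z]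
      by simp
    then have eqj: "\<forall>j\<in>I. co G q c I y (\<sigma> j) = co G q c I z (\<sigma> j)" by (simp add: fun_eq_iff) metis
    have "\<forall>i\<in>I. co G q c I y i = co G q c I z i"
    proof
      fix i assume "i \<in> I"
      then obtain j where "j \<in> I" "i = \<sigma> j" using sig(1) by (metis bij_betw_imp_surj_on imageE)
      then show "co G q c I y i = co G q c I z i" using eqj by simp
    qed
    then have "co G q c I y = co G q c I z"
      using basis_co(1)[OF bas y] basis_co(1)[OF bas z]
      by (auto simp: coeffs_def PiE_iff intro: extensionalityI)
    then show "y = z" using co_inj[OF bas y z] by simp
  qed
  have "\<phi> ` carrier G = carrier G" using endo_inj_surj[OF finG _ inj] phic by auto
  then have iso: "\<phi> \<in> iso G G" using phi_hom inj by (simp add: iso_iff)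
  have "\<forall>y\<in>carrier G. \<phi> (f y) = f' (\<phi> y)"
  proof
    fix y assume y: "y \<in> carrier G"
    have "\<phi> (f y) = lc G c' (\<lambda>j. if f (c (\<sigma> j)) = c (\<sigma> j) then co G q c I y (\<sigma> j) else 0) I"
      unfolding \<phi>_def using diag_co[OF bas q0 f diag y] sigI c'I by (intro lc_cong) auto
    also have "\<dots> = lc G c' (\<lambda>j. if f' (c' j) = c' j then co G q c I y (\<sigma> j) else 0) I"
      using sig(2) sigI c'I by (intro lc_cong) (auto simp: S_def S'_def)
    also have "\<dots> = f' (\<phi> y)" unfolding \<phi>_def by (rule diag_apply[OF bas' f' diag', symmetric])
    finally show "\<phi> (f y) = f' (\<phi> y)" .
  qed
  then show ?thesis using iso by blast
qed

end


abbreviation Vg :: "nat \<Rightarrow> nat set \<Rightarrow> (nat \<Rightarrow> int) monoid" where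
  "Vg q I \<equiv> product_group I (\<lambda>_. integer_mod_group q)"

lemma V_comm: "comm_group (Vg q I)"
proof -
  interpret group "Vg q I" by (rule product_group) simp
  show ?thesis
  proof (rule group_comm_groupI)
    fix x y assume "x \<in> carrier (Vg q I)" "y \<in> carrier (Vg q I)"
    show "x \<otimes>\<^bsub>Vg q I\<^esub> y = y \<otimes>\<^bsub>Vg q I\<^esub> x" by (simp add: add.commute)
  qed
qed

lemma V_carrier: "0 < q \<Longrightarrow> carrier (Vg q I) = PiE I (\<lambda>_. {0..<int q})"
  by (simp add: carrier_integer_mod_group)

lemma V_pow:
  assumes "y \<in> carrier (Vg q I)"
  shows "y [^]\<^bsub>Vg q I\<^esub> (m::nat) = (\<lambda>k\<in>I. (int m * y k) mod int q)"
proof (induct m)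
  case 0 then show ?case by simp
next
  case (Suc m)
  interpret comm_group "Vg q I" by (rule V_comm)
  have "y [^]\<^bsub>Vg q I\<^esub> Suc m = y [^]\<^bsub>Vg q I\<^esub> m \<otimes>\<^bsub>Vg q I\<^esub> y" by simp
  also have "\<dots> = (\<lambda>k\<in>I. (int (Suc m) * y k) mod int q)"
    using Suc by (auto simp: fun_eq_iff mod_add_right_eq algebra_simps)
  finally show ?case .
qed

definition delta :: "nat set \<Rightarrow> nat \<Rightarrow> nat \<Rightarrow> int" where
  "delta I i = (\<lambda>k\<in>I. if k = i then 1 else 0)"

lemma delta_carrier: "1 < q \<Longrightarrow> i \<in> I \<Longrightarrow> delta I i \<in> carrier (Vg q I)"
  by (auto simp: delta_def carrier_integer_mod_group)

lemma lc_V: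
  assumes "1 < q" "finite J" "J \<subseteq> I"
  shows "lc (Vg q I) (delta I) v J = (\<lambda>k\<in>I. if k \<in> J then int (v k) mod int q else 0)"
  using assms(2,3)
proof (induct J rule: finite_induct)
  case empty
  interpret comm_group "Vg q I" by (rule V_comm)
  show ?case by (simp add: lc_def)
next
  case (insert j J)
  interpret comm_group "Vg q I" by (rule V_comm)
  have dI: "delta I \<in> insert j J \<rightarrow> carrier (Vg q I)" using insert assms(1) delta_carrier by auto
  have "lc (Vg q I) (delta I) v (insert j J) = delta I j [^]\<^bsub>Vg q I\<^esub> v j \<otimes>\<^bsub>Vg q I\<^esub> lc (Vg q I) (delta I) v J"
    using insert dI by (intro lc_insert) auto
  also have "\<dots> = (\<lambda>k\<in>I. if k \<in> insert j J then int (v k) mod int q else 0)"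
  proof -
    have jI: "j \<in> I" using insert by auto
    have pw: "delta I j [^]\<^bsub>Vg q I\<^esub> v j = (\<lambda>k\<in>I. if k = j then int (v j) mod int q else 0)"
      using V_pow[OF delta_carrier[OF assms(1) jI]] by (auto simp: delta_def fun_eq_iff)
    have IH: "lc (Vg q I) (delta I) v J = (\<lambda>k\<in>I. if k \<in> J then int (v k) mod int q else 0)"
      using insert by auto
    show ?thesis unfolding pw IH using insert(2) by (auto simp: fun_eq_iff)
  qed
  finally show ?case .
qed

lemma V_basis:
  assumes "1 < q" "finite I"
  shows "is_basis (Vg q I) q (delta I) I"
proof -
  interpret comm_group "Vg q I" by (rule V_comm)
  have q0: "0 < q" using assms by simp
  have dI: "delta I \<in> I \<rightarrow> carrier (Vg q I)" using assms(1) delta_carrier by auto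
  have exp: "\<forall>x\<in>carrier (Vg q I). x [^]\<^bsub>Vg q I\<^esub> q = \<one>\<^bsub>Vg q I\<^esub>"
    using V_pow by (auto simp: fun_eq_iff)
  have lcv: "lc (Vg q I) (delta I) v I = (\<lambda>k\<in>I. int (v k))" if "v \<in> coeffs q I" for v
    using lc_V[OF assms(1) assms(2) subset_refl, of v] that by (auto simp: coeffs_def PiE_iff fun_eq_iff)
  have "bij_betw (\<lambda>v. \<lambda>k\<in>I. int (v k)) (coeffs q I) (carrier (Vg q I))"
  proof (rule bij_betw_byWitness[where f' = "\<lambda>y. \<lambda>k\<in>I. nat (y k)"])
    show "\<forall>a\<in>coeffs q I. (\<lambda>k\<in>I. nat ((\<lambda>k\<in>I. int (a k)) k)) = a"
    proof
      fix a assume a: "a \<in> coeffs q I"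
      then have ext: "a \<in> extensional I" by (simp add: coeffs_def PiE_iff)
      show "(\<lambda>k\<in>I. nat ((\<lambda>k\<in>I. int (a k)) k)) = a"
        by (rule extensionalityI[OF restrict_extensional ext]) simp
    qed
    show "\<forall>a'\<in>carrier (Vg q I). (\<lambda>k\<in>I. int ((\<lambda>k\<in>I. nat (a' k)) k)) = a'"
    proof
      fix a assume a: "a \<in> carrier (Vg q I)"
      then have ext: "a \<in> extensional I" and nn: "\<forall>k\<in>I. 0 \<le> a k"
        using q0 by (auto simp: PiE_iff carrier_integer_mod_group)
      show "(\<lambda>k\<in>I. int ((\<lambda>k\<in>I. nat (a k)) k)) = a"
        by (rule extensionalityI[OF restrict_extensional ext]) (simp add: nn)
    qed
    show "(\<lambda>v. \<lambda>k\<in>I. int (v k)) ` coeffs q I \<subseteq> carrier (Vg q I)"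
      using q0 by (auto simp: carrier_integer_mod_group coeffs_def PiE_iff)
    show "(\<lambda>y. \<lambda>k\<in>I. nat (y k)) ` carrier (Vg q I) \<subseteq> coeffs q I"
      using q0 by (auto simp: carrier_integer_mod_group coeffs_def PiE_iff nat_less_iff)
  qed
  then have "bij_betw (\<lambda>v. lc (Vg q I) (delta I) v I) (coeffs q I) (carrier (Vg q I))"
    by (rule bij_betw_cong[THEN iffD1, rotated]) (simp add: lcv)
  then show ?thesis using assms dI exp by (simp add: is_basis_def)
qed

lemma basis_transfer:
  assumes A: "comm_group A" and B: "comm_group B" and h: "h \<in> iso A B" and bas: "is_basis A q b I"
  shows "is_basis B q (\<lambda>i. h (b i)) I"
proof -
  interpret A: comm_group A by fact
  interpret B: comm_group B by fact
  have hh: "h \<in> hom A B" using h by (simp add: iso_def)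
  interpret gh: group_hom A B h using hh A.is_group B.is_group
    by (simp add: group_hom_def group_hom_axioms_def)
  have finI: "finite I" and bI: "b \<in> I \<rightarrow> carrier A" using bas by (auto simp: is_basis_def)
  have lch: "lc B (\<lambda>i. h (b i)) v I = h (lc A b v I)" for v
    using A.lc_hom[OF B hh finI bI] by simp
  have hbij: "bij_betw h (carrier A) (carrier B)" using h by (simp add: iso_def)
  have "bij_betw (h \<circ> (\<lambda>v. lc A b v I)) (coeffs q I) (carrier B)"
    using bij_betw_trans[OF A.basis_bij[OF bas] hbij] .
  then have bij: "bij_betw (\<lambda>v. lc B (\<lambda>i. h (b i)) v I) (coeffs q I) (carrier B)"
    by (rule bij_betw_cong[THEN iffD1, rotated]) (simp add: lch)
  have exp: "\<forall>y\<in>carrier B. y [^]\<^bsub>B\<^esub> q = \<one>\<^bsub>B\<^esub>"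
  proof
    fix y assume "y \<in> carrier B"
    then obtain x where x: "x \<in> carrier A" "y = h x" using hbij by (auto simp: bij_betw_def)
    then have "y [^]\<^bsub>B\<^esub> q = h (x [^]\<^bsub>A\<^esub> q)" by (simp add: gh.hom_nat_pow)
    also have "\<dots> = \<one>\<^bsub>B\<^esub>" using A.basis_exp[OF bas x(1)] by simp
    finally show "y [^]\<^bsub>B\<^esub> q = \<one>\<^bsub>B\<^esub>" .
  qed
  have "(\<lambda>i. h (b i)) \<in> I \<rightarrow> carrier B" using bI gh.hom_closed by (auto simp: Pi_iff)
  then show ?thesis using finI bij exp by (simp add: is_basis_def)
qed


lemma card_quotient_inv:
  assumes R: "R = {(x, y). x \<in> A \<and> y \<in> A \<and> g x = g y}"
  shows "card (A // R) = card (g ` A)"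
proof (rule bij_betw_same_card)
  have cls: "R `` {x} = {y \<in> A. g y = g x}" if "x \<in> A" for x using that R by auto
  show "bij_betw (\<lambda>Cl. the_elem (g ` Cl)) (A // R) (g ` A)"
  proof (rule bij_betw_byWitness[where f' = "\<lambda>c. {y \<in> A. g y = c}"])
    show "\<forall>Cl\<in>A // R. {y \<in> A. g y = the_elem (g ` Cl)} = Cl"
    proof
      fix Cl assume "Cl \<in> A // R"
      then obtain x where x: "x \<in> A" "Cl = R `` {x}" by (auto simp: quotient_def)
      then have Cl: "Cl = {y \<in> A. g y = g x}" using cls by simp
      have "g ` Cl = {g x}" using Cl x by auto
      then show "{y \<in> A. g y = the_elem (g ` Cl)} = Cl" using Cl by simp
    qed
    show "\<forall>c\<in>g ` A. the_elem (g ` {y \<in> A. g y = c}) = c"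
    proof
      fix c assume "c \<in> g ` A"
      then have "g ` {y \<in> A. g y = c} = {c}" by auto
      then show "the_elem (g ` {y \<in> A. g y = c}) = c" by simp
    qed
    show "(\<lambda>Cl. the_elem (g ` Cl)) ` (A // R) \<subseteq> g ` A"
    proof
      fix c assume "c \<in> (\<lambda>Cl. the_elem (g ` Cl)) ` (A // R)"
      then obtain Cl where Cl: "Cl \<in> A // R" "c = the_elem (g ` Cl)" by blast
      then obtain x where x: "x \<in> A" "Cl = R `` {x}" by (auto simp: quotient_def)
      then have "g ` Cl = {g x}" using cls by auto
      then show "c \<in> g ` A" using Cl x by simp
    qed
    show "(\<lambda>c. {y \<in> A. g y = c}) ` g ` A \<subseteq> A // R"
    proof
      fix Cl assume "Cl \<in> (\<lambda>c. {y \<in> A. g y = c}) ` g ` A"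
      then obtain x where x: "x \<in> A" "Cl = {y \<in> A. g y = g x}" by blast
      then show "Cl \<in> A // R" using cls[OF x(1)] by (metis quotientI)
    qed
  qed
qed

context comm_group
begin

lemma ops_form:
  assumes "m \<in> comm_assoc_interchange_ops G"
  shows "(\<lambda>x. m x \<one>) \<in> hom G G"
    and "\<And>x. x \<in> carrier G \<Longrightarrow> m (m x \<one>) \<one> = m x \<one>"
    and "\<And>x y. x \<in> carrier G \<Longrightarrow> y \<in> carrier G \<Longrightarrow> m x y = m x \<one> \<otimes> m y \<one>"
proof -
  have cl: "\<And>x y. x \<in> carrier G \<Longrightarrow> y \<in> carrier G \<Longrightarrow> m x y \<in> carrier G"
    and law: "\<And>w x y z. w \<in> carrier G \<Longrightarrow> x \<in> carrier G \<Longrightarrow> y \<in> carrier G \<Longrightarrow> z \<in> carrier G \<Longrightarrow>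
        m (w \<otimes> x) (y \<otimes> z) = m w y \<otimes> m x z"
    and cm: "\<And>x y. x \<in> carrier G \<Longrightarrow> y \<in> carrier G \<Longrightarrow> m x y = m y x"
    and as: "\<And>x y z. x \<in> carrier G \<Longrightarrow> y \<in> carrier G \<Longrightarrow> z \<in> carrier G \<Longrightarrow> m (m x y) z = m x (m y z)"
    using assms by (auto simp: comm_assoc_interchange_ops_def interchange_op_def op_commutative_def op_associative_def)
  have m11: "m \<one> \<one> = \<one>"
  proof -
    have "m \<one> \<one> = m (\<one> \<otimes> \<one>) (\<one> \<otimes> \<one>)" by simp
    also have "\<dots> = m \<one> \<one> \<otimes> m \<one> \<one>" by (rule law) simp_all
    finally have "m \<one> \<one> \<otimes> \<one> = m \<one> \<one> \<otimes> m \<one> \<one>" using cl by simp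
    then show ?thesis using cl by (metis l_cancel one_closed)
  qed
  show dec: "\<And>x y. x \<in> carrier G \<Longrightarrow> y \<in> carrier G \<Longrightarrow> m x y = m x \<one> \<otimes> m y \<one>"
  proof -
    fix x y assume x: "x \<in> carrier G" and y: "y \<in> carrier G"
    have "m x y = m (x \<otimes> \<one>) (\<one> \<otimes> y)" using x y by simp
    also have "\<dots> = m x \<one> \<otimes> m \<one> y" using x y by (intro law) simp_all
    finally show "m x y = m x \<one> \<otimes> m y \<one>" using cm[OF one_closed y] by simp
  qed
  show "(\<lambda>x. m x \<one>) \<in> hom G G"
  proof (rule homI)
    fix x y assume x: "x \<in> carrier G" and y: "y \<in> carrier G"
    have "m (x \<otimes> y) \<one> = m (x \<otimes> y) (\<one> \<otimes> \<one>)" by simp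
    also have "\<dots> = m x \<one> \<otimes> m y \<one>" using x y by (intro law) simp_all
    finally show "m (x \<otimes> y) \<one> = m x \<one> \<otimes> m y \<one>" .
  qed (simp add: cl)
  show "\<And>x. x \<in> carrier G \<Longrightarrow> m (m x \<one>) \<one> = m x \<one>"
    using as m11 by simp
qed

lemma ops_of_idem:
  assumes f: "f \<in> hom G G" and idem: "\<And>y. y \<in> carrier G \<Longrightarrow> f (f y) = f y"
  shows "(\<lambda>x y. f x \<otimes> f y) \<in> comm_assoc_interchange_ops G"
proof -
  have fc: "\<And>x. x \<in> carrier G \<Longrightarrow> f x \<in> carrier G" using f by (auto simp: hom_def)
  have fm: "\<And>x y. x \<in> carrier G \<Longrightarrow> y \<in> carrier G \<Longrightarrow> f (x \<otimes> y) = f x \<otimes> f y"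
    using f by (auto simp: hom_def)
  show ?thesis
    unfolding comm_assoc_interchange_ops_def interchange_op_def op_commutative_def op_associative_def
    using fc fm idem by (auto simp: m_ac)
qed

end


context comm_group
begin

lemma proj_exists:
  assumes bas: "is_basis G q a I" and q: "1 < q" and T: "T \<subseteq> I"
  shows "\<exists>f. f \<in> hom G G \<and> (\<forall>y\<in>carrier G. f (f y) = f y) \<and> (\<forall>i\<in>I. f (a i) = a i \<or> f (a i) = \<one>)
            \<and> {i\<in>I. f (a i) = a i} = T"
proof -
  have q0: "0 < q" using q by simp
  have aI: "a \<in> I \<rightarrow> carrier G" using basis_funcset[OF bas] .
  have finI: "finite I" using basis_finite[OF bas] .
  define f where "f y = lc G a (\<lambda>i. if i \<in> T then co G q a I y i else 0) I" for y
  have fc: "\<And>y. f y \<in> carrier G" using aI by (simp add: f_def)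
  have fm: "f (y \<otimes> z) = f y \<otimes> f z" if y: "y \<in> carrier G" and z: "z \<in> carrier G" for y z
  proof -
    have "f (y \<otimes> z) = lc G a (\<lambda>i. ((if i \<in> T then co G q a I y i else 0) + (if i \<in> T then co G q a I z i else 0)) mod q) I"
      unfolding f_def using co_mult[OF bas q0 y z] aI by (intro lc_cong) auto
    also have "\<dots> = lc G a (\<lambda>i. (if i \<in> T then co G q a I y i else 0) + (if i \<in> T then co G q a I z i else 0)) I"
      by (rule lc_mod'[OF bas])
    also have "\<dots> = f y \<otimes> f z" unfolding f_def using aI by (simp add: lc_mult)
    finally show ?thesis .
  qed
  have fhom: "f \<in> hom G G" using fc fm by (auto simp: hom_def)
  have fidem: "\<forall>y\<in>carrier G. f (f y) = f y"
  proof
    fix y assume y: "y \<in> carrier G"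
    have cf: "co G q a I (f y) = (\<lambda>i\<in>I. (if i \<in> T then co G q a I y i else 0) mod q)"
      unfolding f_def by (rule basis_co_lc_gen[OF bas q0])
    show "f (f y) = f y"
      unfolding f_def[of "f y"] using cf co_lt[OF bas y] aI T
      by (subst f_def) (intro lc_cong, auto)
  qed
  have fa: "f (a j) = (if j \<in> T then a j else \<one>)" if j: "j \<in> I" for j
  proof -
    have "f (a j) = lc G a (\<lambda>i. if i \<in> T then (if i = j then 1 else 0) else 0) I"
      unfolding f_def using co_basis_vec[OF bas q j] aI by (intro lc_cong) auto
    also have "\<dots> = (if j \<in> T then a j else \<one>)"
    proof (cases "j \<in> T")
      case True
      have "lc G a (\<lambda>i. if i \<in> T then (if i = j then 1 else 0) else 0) I = lc G a (\<lambda>i. if i = j then 1 else 0) I"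
        using True aI by (intro lc_cong) auto
      then show ?thesis using lc_delta[OF finI j aI] True by simp
    next
      case False
      have "lc G a (\<lambda>i. if i \<in> T then (if i = j then 1 else 0) else 0) I = lc G a (\<lambda>i. 0) I"
        using False aI by (intro lc_cong) auto
      then show ?thesis using lc_zero False by simp
    qed
    finally show ?thesis .
  qed
  have ane: "a j \<noteq> \<one>" if j: "j \<in> I" for j
  proof
    assume "a j = \<one>"
    then have "co G q a I (a j) j = co G q a I \<one> j" by simp
    then show False using co_basis_vec[OF bas q j] co_one[OF bas q0] j by simp
  qed
  have "\<forall>i\<in>I. f (a i) = a i \<or> f (a i) = \<one>" using fa by simp
  moreover have "{i\<in>I. f (a i) = a i} = T"
  proof -
    have s1: "{i\<in>I. f (a i) = a i} \<subseteq> T"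
    proof
      fix i assume "i \<in> {i\<in>I. f (a i) = a i}"
      then have i: "i \<in> I" "f (a i) = a i" by auto
      show "i \<in> T"
      proof (rule ccontr)
        assume "i \<notin> T"
        then have "f (a i) = \<one>" using fa[OF i(1)] by simp
        then show False using i ane[OF i(1)] by simp
      qed
    qed
    have s2: "T \<subseteq> {i\<in>I. f (a i) = a i}" using fa T by auto
    show ?thesis using s1 s2 by (rule subset_antisym)
  qed
  ultimately show ?thesis using fhom fidem by blast
qed

end


context comm_group
begin

lemma main_count:
  assumes pr: "Factorial_Ring.prime p" and n1: "n \<ge> 1" and basa: "is_basis G (p ^ n) a {..<r}"
  shows "card (comm_assoc_interchange_ops G //
                 {(m, m'). m \<in> comm_assoc_interchange_ops G \<and> m' \<in> comm_assoc_interchange_ops G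
                           \<and> interchange_iso G m m'}) = r + 1"
proof -
  define q where "q = p ^ n"
  define I where "I = {..<r::nat}"
  have p1: "1 < p" using pr prime_gt_1_nat by blast
  have q: "1 < q" using one_less_power[OF p1, of n] n1 by (simp add: q_def)
  have q0: "0 < q" using q by simp
  have finI: "finite I" by (simp add: I_def)
  have bas: "is_basis G q a I" using basa by (simp add: q_def I_def)
  define Ops where "Ops = comm_assoc_interchange_ops G"
  define iv where "iv m = card ((\<lambda>x. m x \<one>) ` carrier G)" for m :: "'a \<Rightarrow> 'a \<Rightarrow> 'a"
  have qinj: "\<And>k l. q ^ k = q ^ l \<Longrightarrow> k = l" using q by (simp add: power_inject_exp)
  have diagm: "\<exists>c. is_basis G q c I \<and> (\<forall>i\<in>I. m (c i) \<one> = c i \<or> m (c i) \<one> = \<one>)" if m: "m \<in> Ops" for m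
    using diag_exists[OF finI pr q_def n1 comm_group_axioms bas ops_form(1)[of m] ops_form(2)[of m]] m
    by (simp add: Ops_def)
  have ivval: "iv m = q ^ card {i\<in>I. m (c i) \<one> = c i}"
    if m: "m \<in> Ops" and c: "is_basis G q c I" "\<forall>i\<in>I. m (c i) \<one> = c i \<or> m (c i) \<one> = \<one>" for m c
    using diag_card[OF c(1) q0 ops_form(1)[of m] c(2)] m by (simp add: iv_def Ops_def)
  have iff: "interchange_iso G m m' \<longleftrightarrow> iv m = iv m'" if m: "m \<in> Ops" and m': "m' \<in> Ops" for m m'
  proof
    assume "interchange_iso G m m'"
    then obtain \<phi> where phi: "\<phi> \<in> iso G G" "\<forall>x\<in>carrier G. \<forall>y\<in>carrier G. \<phi> (m x y) = m' (\<phi> x) (\<phi> y)"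
      by (auto simp: interchange_iso_def)
    interpret ph: group_hom G G \<phi> using phi(1) is_group by (simp add: group_hom_def group_hom_axioms_def iso_def)
    have fm_c: "\<And>x. x \<in> carrier G \<Longrightarrow> m x \<one> \<in> carrier G"
      using ops_form(1)[of m] m by (auto simp: Ops_def hom_def)
    have comm: "m' (\<phi> x) \<one> = \<phi> (m x \<one>)" if "x \<in> carrier G" for x
      using phi(2) that by simp
    have img1: "\<phi> ` carrier G = carrier G" using phi(1) by (simp add: iso_iff)
    have injp: "inj_on \<phi> (carrier G)" using phi(1) by (simp add: iso_iff)
    have img2: "(\<lambda>x. m' x \<one>) ` carrier G = \<phi> ` ((\<lambda>x. m x \<one>) ` carrier G)"
    proof -
      have "(\<lambda>x. m' x \<one>) ` carrier G = (\<lambda>x. m' x \<one>) ` (\<phi> ` carrier G)" using img1 by simp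
      also have "\<dots> = (\<lambda>x. m' (\<phi> x) \<one>) ` carrier G" by (simp add: image_image)
      also have "\<dots> = (\<lambda>x. \<phi> (m x \<one>)) ` carrier G" using comm by (rule image_cong[OF refl])
      also have "\<dots> = \<phi> ` ((\<lambda>x. m x \<one>) ` carrier G)" by (simp add: image_image)
      finally show ?thesis .
    qed
    have sub: "(\<lambda>x. m x \<one>) ` carrier G \<subseteq> carrier G" using fm_c by blast
    have "card (\<phi> ` ((\<lambda>x. m x \<one>) ` carrier G)) = card ((\<lambda>x. m x \<one>) ` carrier G)"
      by (rule card_image[OF inj_on_subset[OF injp sub]])
    then show "iv m = iv m'" using img2 by (simp add: iv_def)
  next
    assume eq: "iv m = iv m'"
    obtain c where c: "is_basis G q c I" "\<forall>i\<in>I. m (c i) \<one> = c i \<or> m (c i) \<one> = \<one>" using diagm[OF m] by blast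
    obtain c' where c': "is_basis G q c' I" "\<forall>i\<in>I. m' (c' i) \<one> = c' i \<or> m' (c' i) \<one> = \<one>" using diagm[OF m'] by blast
    have "card {i\<in>I. m (c i) \<one> = c i} = card {i\<in>I. m' (c' i) \<one> = c' i}"
      using eq ivval[OF m c] ivval[OF m' c'] qinj by simp
    then obtain \<phi> where phi: "\<phi> \<in> iso G G" "\<forall>y\<in>carrier G. \<phi> (m y \<one>) = m' (\<phi> y) \<one>"
      using diag_conj[OF c(1) c'(1) q0 ops_form(1)[of m] c(2) ops_form(1)[of m'] c'(2)] m m'
      by (auto simp: Ops_def)
    interpret ph: group_hom G G \<phi> using phi(1) is_group by (simp add: group_hom_def group_hom_axioms_def iso_def)
    have fm_c: "\<And>x. x \<in> carrier G \<Longrightarrow> m x \<one> \<in> carrier G"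
      using ops_form(1)[of m] m by (auto simp: Ops_def hom_def)
    have "\<forall>x\<in>carrier G. \<forall>y\<in>carrier G. \<phi> (m x y) = m' (\<phi> x) (\<phi> y)"
    proof (intro ballI)
      fix x y assume x: "x \<in> carrier G" and y: "y \<in> carrier G"
      have "\<phi> (m x y) = \<phi> (m x \<one> \<otimes> m y \<one>)" using ops_form(3)[of m x y] m x y by (simp add: Ops_def)
      also have "\<dots> = \<phi> (m x \<one>) \<otimes> \<phi> (m y \<one>)" using fm_c x y by simp
      also have "\<dots> = m' (\<phi> x) \<one> \<otimes> m' (\<phi> y) \<one>" using phi(2) x y by simp
      also have "\<dots> = m' (\<phi> x) (\<phi> y)" using ops_form(3)[of m' "\<phi> x" "\<phi> y"] m' x y by (simp add: Ops_def)
      finally show "\<phi> (m x y) = m' (\<phi> x) (\<phi> y)" .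
    qed
    then show "interchange_iso G m m'" using phi(1) by (auto simp: interchange_iso_def)
  qed
  have Req: "{(m, m'). m \<in> Ops \<and> m' \<in> Ops \<and> interchange_iso G m m'} = {(m, m'). m \<in> Ops \<and> m' \<in> Ops \<and> iv m = iv m'}"
    using iff by auto
  have "card (Ops // {(m, m'). m \<in> Ops \<and> m' \<in> Ops \<and> interchange_iso G m m'}) = card (iv ` Ops)"
    unfolding Req by (rule card_quotient_inv) simp
  also have "iv ` Ops = (\<lambda>k. q ^ k) ` {..r}"
  proof
    show "iv ` Ops \<subseteq> (\<lambda>k. q ^ k) ` {..r}"
    proof
      fix z assume "z \<in> iv ` Ops"
      then obtain m where m: "m \<in> Ops" "z = iv m" by blast
      obtain c where c: "is_basis G q c I" "\<forall>i\<in>I. m (c i) \<one> = c i \<or> m (c i) \<one> = \<one>" using diagm[OF m(1)] by blast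
      have "card {i\<in>I. m (c i) \<one> = c i} \<le> card I" using finI by (intro card_mono) auto
      then show "z \<in> (\<lambda>k. q ^ k) ` {..r}" using ivval[OF m(1) c] m(2) by (auto simp: I_def)
    qed
    show "(\<lambda>k. q ^ k) ` {..r} \<subseteq> iv ` Ops"
    proof
      fix z assume "z \<in> (\<lambda>k. q ^ k) ` {..r}"
      then obtain k where k: "k \<le> r" "z = q ^ k" by auto
      obtain f where f: "f \<in> hom G G" "\<forall>y\<in>carrier G. f (f y) = f y"
        "\<forall>i\<in>I. f (a i) = a i \<or> f (a i) = \<one>" "{i\<in>I. f (a i) = a i} = {..<k}"
        using proj_exists[OF bas q, of "{..<k}"] k by (auto simp: I_def)
      define m where "m = (\<lambda>x y. f x \<otimes> f y)"
      have mO: "m \<in> Ops" using ops_of_idem[OF f(1)] f(2) by (simp add: m_def Ops_def)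
      interpret fh: group_hom G G f using f(1) is_group by (simp add: group_hom_def group_hom_axioms_def)
      have "(\<lambda>x. m x \<one>) ` carrier G = f ` carrier G" by (auto simp: m_def)
      then have "iv m = card (f ` carrier G)" by (simp add: iv_def)
      also have "\<dots> = q ^ k" using diag_card[OF bas q0 f(1) f(3)] f(4) by simp
      finally have ivm: "iv m = q ^ k" .
      show "z \<in> iv ` Ops" by (rule rev_image_eqI[OF mO]) (simp add: ivm k(2))
    qed
  qed
  also have "card ((\<lambda>k. q ^ k) ` {..r}) = r + 1"
    using qinj by (subst card_image) (auto simp: inj_on_def)
  finally show ?thesis by (simp add: Ops_def)
qed

end


theorem corollary6p4:
  fixes G :: "('a, 'b) monoid_scheme" and p n r :: nat
  assumes "Factorial_Ring.prime p" and "n \<ge> 1" and "r \<ge> 1"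
    and "elem_abelian_ppc G p n r"
  shows "card (comm_assoc_interchange_ops G //
                 {(m, m'). m \<in> comm_assoc_interchange_ops G \<and> m' \<in> comm_assoc_interchange_ops G
                           \<and> interchange_iso G m m'}) = r + 1"
proof -
  have p1: "1 < p" using assms(1) prime_gt_1_nat by blast
  have q: "1 < p ^ n" using one_less_power[OF p1, of n] assms(2) by simp
  have cg: "comm_group G" and iso: "G \<cong> Vg (p ^ n) {..<r}"
    using assms(4) by (simp_all add: elem_abelian_ppc_def)
  interpret comm_group G by (rule cg)
  obtain h where h: "h \<in> iso G (Vg (p ^ n) {..<r})" using iso by (auto simp: is_iso_def)
  have h': "inv_into (carrier G) h \<in> iso (Vg (p ^ n) {..<r}) G" using iso_set_sym[OF h] .
  have basa: "is_basis G (p ^ n) (\<lambda>i. inv_into (carrier G) h (delta {..<r} i)) {..<r}"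
    by (rule basis_transfer[OF V_comm cg h' V_basis[OF q]]) simp
  show ?thesis using main_count[OF assms(1) assms(2) basa] .
qed


end
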